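(* Let $q$ be a prime power, $0\le k\le n$, and let $X\in\mathcal{G}_q(n,k)$ with $\mathrm{EXT}(X)=\begin{pmatrix} v_n&\cdots&v_2&v_1\\ X_n&\cdots&X_2&X_1\end{pmatrix}$. For $0\le j\le n$ let $w_j=\sum_{\ell=1}^{j}v_\ell$ (so $w_0=0$). Then the number $\mathrm{I}_{\mathrm{EXT}}(X)$ of subspaces $Y\in\mathcal{G}_q(n,k)$ with $Y<X$ in the extended-representation order is \[\mathrm{I}_{\mathrm{EXT}}(X)=\sum_{j=1}^{n}\Bigl(v_j\,q^{k-w_{j-1}}+(1-v_j)\frac{\{X_j\}}{q^{w_{j-1}}}\Bigr)\left[\begin{smallmatrix} n-j\\ k-w_{j-1}\end{smallmatrix}\right]_q .\]
   Context: $\mathbb{F}_q$ is the finite field of size $q$; its elements are identified with $\mathbb{Z}_q=\{0,\dots,q-1\}$ by a fixed bijection (with $0\mapsto0$, $1\mapsto1$). $\mathcal{G}_q(n,k)$ is the set of all $k$-dimensional subspaces of $\mathbb{F}_q^n$. The Gaussian coefficient is $\left[\begin{smallmatrix} n\\ k\end{smallmatrix}\right]_q=\prod_{i=0}^{k-1}\frac{q^{n-i}-1}{q^{k-i}-1}$, with $\left[\begin{smallmatrix} n\\ 0\end{smallmatrix}\right]_q=1$ and value $0$ if $k>n$ or $k<0$. For $X\in\mathcal{G}_q(n,k)$, $\mathrm{RE}(X)$ is the unique $k\times n$ reduced row echelon matrix whose rows span $X$, with columns labelled $X_n,\dots,X_1$ from left to right. The identifying vector $v(X)=(v_n,\dots,v_1)$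 is binary with $v_i=1$ iff column $X_i$ contains a row's leading one. $\mathrm{EXT}(X)$ is the $(k+1)\times n$ matrix with top row $v(X)$ above $\mathrm{RE}(X)$; its $i$-th column is $\binom{v_i}{X_i}$. For a $q$-ary vector $y=(y_1,\dots,y_r)$ (as a column, $y_1$ on top), $\{y\}=\sum_{t=1}^{r}y_tq^{r-t}$ is its value as a base-$q$ number with $y_1$ most significant. Order on $\mathcal{G}_q(n,k)$: $X<Y$ if, for the least index $i$ such that the $i$-th columns of $\mathrm{EXT}(X)$ and $\mathrm{EXT}(Y)$ differ, $\left\{\binom{v(X)_i}{X_i}\right\}<\left\{\binom{v(Y)_i}{Y_i}\right\}$. *)

theory Defs
  imports Complex_Main
begin

text \<open>Vectors of F_q^n are functions nat => 'a whose coordinates are indexed by the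
column labels 1..n (label n is the leftmost column), zero elsewhere.
A k x n matrix is a function M r i, row r in 1..k (top to bottom), column label i in 1..n.\<close>

definition Fn :: "nat \<Rightarrow> (nat \<Rightarrow> 'a::field) set" where
  "Fn n = {x. \<forall>i. (i < 1 \<or> i > n) \<longrightarrow> x i = 0}"

definition rowspan :: "nat \<Rightarrow> (nat \<Rightarrow> nat \<Rightarrow> 'a::field) \<Rightarrow> (nat \<Rightarrow> 'a) set" where
  "rowspan k M = {x. \<exists>c. x = (\<lambda>i. \<Sum>r\<in>{1..k}. c r * M r i)}"

definition lin_indep :: "nat \<Rightarrow> (nat \<Rightarrow> nat \<Rightarrow> 'a::field) \<Rightarrow> bool" where
  "lin_indep k B = (\<forall>c. (\<lambda>i. \<Sum>r\<in>{1..k}. c r * B r i) = (\<lambda>i. 0) \<longrightarrow> (\<forall>r\<in>{1..k}. c r = 0))"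

definition Gq :: "nat \<Rightarrow> nat \<Rightarrow> (nat \<Rightarrow> 'a::field) set set" where
  "Gq n k = {rowspan k B | B. (\<forall>r\<in>{1..k}. B r \<in> Fn n) \<and> lin_indep k B}"

text \<open>Reduced row echelon form (columns labelled n..1 left to right, so the leading
one of a row is its nonzero entry of largest label).\<close>
definition is_RREF :: "nat \<Rightarrow> nat \<Rightarrow> (nat \<Rightarrow> nat \<Rightarrow> 'a::field) \<Rightarrow> bool" where
  "is_RREF n k M =
    ((\<forall>r i. (r \<notin> {1..k} \<or> i \<notin> {1..n}) \<longrightarrow> M r i = 0) \<and>
     (\<exists>ld. (\<forall>r\<in>{1..k}. ld r \<in> {1..n} \<and> M r (ld r) = 1 \<and> (\<forall>i. i > ld r \<longrightarrow> M r i = 0)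
                 \<and> (\<forall>r'\<in>{1..k}. r' \<noteq> r \<longrightarrow> M r' (ld r) = 0))
          \<and> (\<forall>r\<in>{1..k}. \<forall>r'\<in>{1..k}. r < r' \<longrightarrow> ld r' < ld r)))"

definition RE :: "nat \<Rightarrow> nat \<Rightarrow> (nat \<Rightarrow> 'a::field) set \<Rightarrow> nat \<Rightarrow> nat \<Rightarrow> 'a" where
  "RE n k X = (THE M. is_RREF n k M \<and> rowspan k M = X)"

definition vvec :: "nat \<Rightarrow> nat \<Rightarrow> (nat \<Rightarrow> 'a::field) set \<Rightarrow> nat \<Rightarrow> nat" where
  "vvec n k X i = (if \<exists>r\<in>{1..k}. RE n k X r i = 1 \<and> (\<forall>i'. i' > i \<longrightarrow> RE n k X r i' = 0)
                   then 1 else 0)"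

definition wsum :: "nat \<Rightarrow> nat \<Rightarrow> (nat \<Rightarrow> 'a::field) set \<Rightarrow> nat \<Rightarrow> nat" where
  "wsum n k X j = (\<Sum>l\<in>{1..j}. vvec n k X l)"

text \<open>{X_i}: value of column X_i of RE(X) as a base-q number (top entry most significant),
via the fixed bijection enc : F_q -> Z_q.\<close>
definition colX_val :: "nat \<Rightarrow> ('a::field \<Rightarrow> nat) \<Rightarrow> nat \<Rightarrow> nat \<Rightarrow> (nat \<Rightarrow> 'a) set \<Rightarrow> nat \<Rightarrow> nat" where
  "colX_val q enc n k X i = (\<Sum>t\<in>{1..k}. enc (RE n k X t i) * q ^ (k - t))"

definition ext_colval :: "nat \<Rightarrow> ('a::field \<Rightarrow> nat) \<Rightarrow> nat \<Rightarrow> nat \<Rightarrow> (nat \<Rightarrow> 'a) set \<Rightarrow> nat \<Rightarrow> nat" where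
  "ext_colval q enc n k X i = vvec n k X i * q ^ k + colX_val q enc n k X i"

definition ext_col_differ :: "nat \<Rightarrow> nat \<Rightarrow> (nat \<Rightarrow> 'a::field) set \<Rightarrow> (nat \<Rightarrow> 'a) set \<Rightarrow> nat \<Rightarrow> bool" where
  "ext_col_differ n k X Y i =
     (vvec n k X i \<noteq> vvec n k Y i \<or> (\<exists>t\<in>{1..k}. RE n k X t i \<noteq> RE n k Y t i))"

definition ext_less :: "nat \<Rightarrow> ('a::field \<Rightarrow> nat) \<Rightarrow> nat \<Rightarrow> nat \<Rightarrow> (nat \<Rightarrow> 'a) set \<Rightarrow> (nat \<Rightarrow> 'a) set \<Rightarrow> bool" where
  "ext_less q enc n k X Y =
     (\<exists>i\<in>{1..n}. ext_col_differ n k X Y i \<and> (\<forall>i'\<in>{1..<i}. \<not> ext_col_differ n k X Y i')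
        \<and> ext_colval q enc n k X i < ext_colval q enc n k Y i)"

definition gauss :: "nat \<Rightarrow> nat \<Rightarrow> int \<Rightarrow> real" where
  "gauss q m k = (if k < 0 \<or> k > int m then 0
                  else (\<Prod>i<nat k. (real q ^ (m - i) - 1) / (real q ^ (nat k - i) - 1)))"

end

theory Submission
  imports Defs "HOL-Library.FuncSet"
begin

definition BOX :: "nat \<Rightarrow> nat \<Rightarrow> (nat \<Rightarrow> nat \<Rightarrow> 'a::field) \<Rightarrow> bool" where
 "BOX n k M = (\<forall>r i. (r \<notin> {1..k} \<or> i \<notin> {1..n}) \<longrightarrow> M r i = 0)"
definition LD :: "nat \<Rightarrow> nat \<Rightarrow> (nat \<Rightarrow> nat \<Rightarrow> 'a::field) \<Rightarrow> (nat \<Rightarrow> nat) \<Rightarrow> bool" where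
 "LD n k M ld = ((\<forall>r\<in>{1..k}. ld r \<in> {1..n} \<and> M r (ld r) = 1 \<and> (\<forall>i. i > ld r \<longrightarrow> M r i = 0)
     \<and> (\<forall>r'\<in>{1..k}. r' \<noteq> r \<longrightarrow> M r' (ld r) = 0)) \<and> (\<forall>r\<in>{1..k}. \<forall>r'\<in>{1..k}. r < r' \<longrightarrow> ld r' < ld r))"

lemma RREF_iff: "is_RREF n k M \<longleftrightarrow> BOX n k M \<and> (\<exists>ld. LD n k M ld)"
  unfolding is_RREF_def BOX_def LD_def by blast

definition lv :: "nat \<Rightarrow> (nat \<Rightarrow> nat \<Rightarrow> 'a::field) \<Rightarrow> nat \<Rightarrow> nat" where
  "lv k M i = (if \<exists>r\<in>{1..k}. M r i = 1 \<and> (\<forall>i'. i' > i \<longrightarrow> M r i' = 0) then 1 else 0)"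

lemma LD_lead:
  assumes "LD n k M ld" "r \<in> {1..k}" "M r i = 1" "\<forall>i'. i' > i \<longrightarrow> M r i' = 0"
  shows "i = ld r"
proof -
  have a: "M r (ld r) = 1" "\<forall>i. i > ld r \<longrightarrow> M r i = 0" using assms(1,2) unfolding LD_def by auto
  show ?thesis
  proof (rule ccontr)
    assume "i \<noteq> ld r"
    then consider "i < ld r" | "i > ld r" by linarith
    then show False using a assms(3,4) by (metis zero_neq_one)
  qed
qed

lemma lv_iff:
  assumes "LD n k M ld"
  shows "lv k M i = (if \<exists>r\<in>{1..k}. ld r = i then 1 else 0)"
proof -
  have "(\<exists>r\<in>{1..k}. M r i = 1 \<and> (\<forall>i'. i' > i \<longrightarrow> M r i' = 0)) \<longleftrightarrow> (\<exists>r\<in>{1..k}. ld r = i)"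
    using LD_lead[OF assms] assms unfolding LD_def by blast
  then show ?thesis unfolding lv_def by simp
qed

lemma LD_mono: "LD n k M ld \<Longrightarrow> r \<in> {1..k} \<Longrightarrow> r' \<in> {1..k} \<Longrightarrow> r < r' \<Longrightarrow> ld r' < ld r"
  unfolding LD_def by blast

lemma LD_row: "LD n k M ld \<Longrightarrow> r \<in> {1..k} \<Longrightarrow> ld r \<in> {1..n} \<and> M r (ld r) = 1 \<and> (\<forall>i. i > ld r \<longrightarrow> M r i = 0)
     \<and> (\<forall>r'\<in>{1..k}. r' \<noteq> r \<longrightarrow> M r' (ld r) = 0)"
  unfolding LD_def by blast

definition sh :: "(nat \<Rightarrow> nat \<Rightarrow> 'a::zero) \<Rightarrow> nat \<Rightarrow> nat \<Rightarrow> 'a" where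
 "sh M = (\<lambda>r i. if i = 0 then 0 else M r (Suc i))"
definition ext0 :: "(nat \<Rightarrow> 'a::zero) \<Rightarrow> (nat \<Rightarrow> nat \<Rightarrow> 'a) \<Rightarrow> nat \<Rightarrow> nat \<Rightarrow> 'a" where
 "ext0 c M = (\<lambda>r i. if i = 0 then 0 else if i = 1 then c r else M r (i - 1))"
definition ext1 :: "nat \<Rightarrow> (nat \<Rightarrow> nat \<Rightarrow> 'a::{zero,one}) \<Rightarrow> nat \<Rightarrow> nat \<Rightarrow> 'a" where
 "ext1 k M = (\<lambda>r i. if i = 0 then 0 else if i = 1 then (if r = k then 1 else 0) else M r (i - 1))"
definition col1 :: "(nat \<Rightarrow> nat \<Rightarrow> 'a) \<Rightarrow> nat \<Rightarrow> 'a" where "col1 M = (\<lambda>r. M r 1)"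
definition CC :: "nat \<Rightarrow> (nat \<Rightarrow> 'a::zero) set" where "CC k = {c. \<forall>r. r \<notin> {1..k} \<longrightarrow> c r = 0}"

lemma sh_RREF0:
  assumes B: "BOX (Suc n) k M" and L: "LD (Suc n) k M ld" and v: "lv k M 1 = 0"
  shows "BOX n k (sh M)" "LD n k (sh M) (\<lambda>r. ld r - 1)" "\<forall>r\<in>{1..k}. ld r \<ge> 2"
proof -
  have ge: "\<forall>r\<in>{1..k}. ld r \<ge> 2"
  proof
    fix r assume r: "r \<in> {1..k}"
    have "ld r \<noteq> 1" using v lv_iff[OF L, of 1] r by (auto split: if_splits)
    moreover have "ld r \<ge> 1" using LD_row[OF L r] by auto
    ultimately show "ld r \<ge> 2" by linarith
  qed
  then show "\<forall>r\<in>{1..k}. ld r \<ge> 2" .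
  show "BOX n k (sh M)" using B unfolding BOX_def sh_def by auto
  show "LD n k (sh M) (\<lambda>r. ld r - 1)"
    unfolding LD_def
  proof (intro conjI ballI allI impI)
    fix r assume r: "r \<in> {1..k}"
    note R = LD_row[OF L r]
    have g: "ld r \<ge> 2" using ge r by blast
    show "ld r - 1 \<in> {1..n}" using R g by auto
    show "sh M r (ld r - 1) = 1" using R g unfolding sh_def by (simp add: Suc_diff_1)
    show "\<And>i. i > ld r - 1 \<Longrightarrow> sh M r i = 0" using R g unfolding sh_def by auto
    show "\<And>r'. r' \<in> {1..k} \<Longrightarrow> r' \<noteq> r \<Longrightarrow> sh M r' (ld r - 1) = 0" using R g unfolding sh_def
      by (simp add: Suc_diff_1)
  next
    fix r r' assume "r \<in> {1..k}" "r' \<in> {1..k}" "r < r'"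
    then show "ld r' - 1 < ld r - 1" using LD_mono[OF L] ge by (meson diff_less_mono less_le_trans numeral_le_one_iff semiring_norm(69) nat_le_linear le_trans one_le_numeral) 
  qed
qed

lemma sh_RREF1:
  assumes B: "BOX (Suc n) k M" and L: "LD (Suc n) k M ld" and v: "lv k M 1 = 1"
  shows "k \<ge> 1" "ld k = 1" "\<forall>r\<in>{1..<k}. ld r \<ge> 2" "\<forall>i. M k i = (if i = 1 then 1 else 0)"
     "\<forall>r. r \<noteq> k \<longrightarrow> M r 1 = 0"
     "BOX n (k-1) (sh M)" "LD n (k-1) (sh M) (\<lambda>r. ld r - 1)"
proof -
  have "\<exists>r\<in>{1..k}. ld r = 1" using v lv_iff[OF L, of 1] by (metis zero_neq_one)
  then obtain r0 where r0: "r0 \<in> {1..k}" "ld r0 = 1" by blast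
  show k1: "k \<ge> 1" using r0 by auto
  have "r0 = k"
  proof (rule ccontr)
    assume "r0 \<noteq> k"
    then have "r0 < k" using r0 by auto
    then have "ld k < ld r0" using LD_mono[OF L, of r0 k] r0 k1 by auto
    moreover have "ld k \<ge> 1" using LD_row[OF L, of k] k1 by auto
    ultimately show False using r0 by auto
  qed
  then show ldk: "ld k = 1" using r0 by simp
  show ge: "\<forall>r\<in>{1..<k}. ld r \<ge> 2"
  proof
    fix r assume r: "r \<in> {1..<k}"
    have "ld k < ld r" using LD_mono[OF L, of r k] r k1 by auto
    then show "ld r \<ge> 2" using ldk by simp
  qed
  have Rk: "M k 1 = 1" "\<forall>i. i > 1 \<longrightarrow> M k i = 0" "\<forall>r'\<in>{1..k}. r' \<noteq> k \<longrightarrow> M r' 1 = 0"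
    using LD_row[OF L, of k] k1 ldk by auto
  have M0: "M k 0 = 0" using B unfolding BOX_def by auto
  show "\<forall>i. M k i = (if i = 1 then 1 else 0)"
  proof
    fix i show "M k i = (if i = 1 then 1 else 0)" using Rk M0 by (cases "i = 0"; cases "i = 1"; auto)
  qed
  show "\<forall>r. r \<noteq> k \<longrightarrow> M r 1 = 0" using Rk B unfolding BOX_def by auto
  show "BOX n (k-1) (sh M)" unfolding BOX_def
  proof (intro allI impI)
    fix r i assume a: "r \<notin> {1..k-1} \<or> i \<notin> {1..n}"
    show "sh M r i = 0"
    proof (cases "i = 0")
      case True then show ?thesis unfolding sh_def by simp
    next
      case False
      then have "r \<notin> {1..k} \<or> Suc i \<notin> {1..Suc n} \<or> (r = k \<and> Suc i > 1)" using a by auto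
      then have "M r (Suc i) = 0" using B Rk(2) unfolding BOX_def by blast
      then show ?thesis using False unfolding sh_def by simp
    qed
  qed
  show "LD n (k-1) (sh M) (\<lambda>r. ld r - 1)"
    unfolding LD_def
  proof (intro conjI ballI allI impI)
    fix r assume r: "r \<in> {1..k-1}"
    then have rk: "r \<in> {1..k}" by auto
    note R = LD_row[OF L rk]
    have g: "ld r \<ge> 2" using ge r by auto
    show "ld r - 1 \<in> {1..n}" using R g by auto
    show "sh M r (ld r - 1) = 1" using R g unfolding sh_def by (simp add: Suc_diff_1)
    show "\<And>i. i > ld r - 1 \<Longrightarrow> sh M r i = 0" using R g unfolding sh_def by auto
    show "\<And>r'. r' \<in> {1..k-1} \<Longrightarrow> r' \<noteq> r \<Longrightarrow> sh M r' (ld r - 1) = 0"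
    proof -
      fix r' assume "r' \<in> {1..k-1}" "r' \<noteq> r"
      then have "r' \<in> {1..k}" by auto
      then have "M r' (ld r) = 0" using R \<open>r' \<noteq> r\<close> by blast
      then show "sh M r' (ld r - 1) = 0" using g unfolding sh_def by (simp add: Suc_diff_1)
    qed
  next
    fix r r' show "r \<in> {1..k-1} \<Longrightarrow> r' \<in> {1..k-1} \<Longrightarrow> r < r' \<Longrightarrow> ld r' - 1 < ld r - 1"
    proof -
      assume a: "r \<in> {1..k-1}" "r' \<in> {1..k-1}" "r < r'"
      have "ld r' < ld r" using LD_mono[OF L, of r r'] a by auto
      moreover have "ld r' \<ge> 2" using ge a by auto
      ultimately show ?thesis by linarith
    qed
  qed
qed

lemma ext0_RREF:
  assumes B: "BOX n k M" and L: "LD n k M ld" and c: "c \<in> CC k"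
  shows "BOX (Suc n) k (ext0 c M)" "LD (Suc n) k (ext0 c M) (\<lambda>r. Suc (ld r))" "lv k (ext0 c M) 1 = 0"
    "sh (ext0 c M) = M" "col1 (ext0 c M) = c"
proof -
  show "BOX (Suc n) k (ext0 c M)" unfolding BOX_def
  proof (intro allI impI)
    fix r i assume a: "r \<notin> {1..k} \<or> i \<notin> {1..Suc n}"
    show "ext0 c M r i = 0"
    proof (cases "i = 0 \<or> i = 1")
      case True then show ?thesis using a c unfolding ext0_def CC_def by auto
    next
      case False
      then have "r \<notin> {1..k} \<or> i - 1 \<notin> {1..n}" using a by auto
      then have "M r (i - 1) = 0" using B unfolding BOX_def by blast
      then show ?thesis using False unfolding ext0_def by simp
    qed
  qed
  show L2: "LD (Suc n) k (ext0 c M) (\<lambda>r. Suc (ld r))"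
    using L unfolding LD_def ext0_def by auto
  have "\<forall>r\<in>{1..k}. ld r \<ge> 1" using L unfolding LD_def by auto
  then show "lv k (ext0 c M) 1 = 0" using lv_iff[OF L2, of 1] by (simp add: Suc_le_eq)
  show "sh (ext0 c M) = M" using B unfolding sh_def ext0_def BOX_def by (auto intro!: ext)
  show "col1 (ext0 c M) = c" unfolding col1_def ext0_def by auto
qed

lemma ext1_RREF:
  assumes B: "BOX n (k-1) M" and L: "LD n (k-1) M ld" and k: "k \<ge> 1"
  shows "BOX (Suc n) k (ext1 k M)" "LD (Suc n) k (ext1 k M) (\<lambda>r. if r = k then 1 else Suc (ld r))"
    "lv k (ext1 k M) 1 = 1" "sh (ext1 k M) = M"
proof -
  show "BOX (Suc n) k (ext1 k M)" unfolding BOX_def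
  proof (intro allI impI)
    fix r i assume a: "r \<notin> {1..k} \<or> i \<notin> {1..Suc n}"
    show "ext1 k M r i = 0"
    proof (cases "i = 0 \<or> i = 1")
      case True then show ?thesis using a k unfolding ext1_def by auto
    next
      case False
      then have "r \<notin> {1..k-1} \<or> i - 1 \<notin> {1..n}" using a by auto
      then have "M r (i - 1) = 0" using B unfolding BOX_def by blast
      then show ?thesis using False unfolding ext1_def by simp
    qed
  qed
  have Mk: "\<forall>i. M k i = 0" using B k unfolding BOX_def by (metis atLeastAtMost_iff diff_less less_numeral_extra(1) not_le zero_less_one order.strict_trans2 le_less_trans)
  show L2: "LD (Suc n) k (ext1 k M) (\<lambda>r. if r = k then 1 else Suc (ld r))"
    unfolding LD_def
  proof (intro conjI ballI allI impI)
    fix r assume r: "r \<in> {1..k}"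
    have R: "r \<noteq> k \<Longrightarrow> ld r \<in> {1..n} \<and> M r (ld r) = 1 \<and> (\<forall>i. i > ld r \<longrightarrow> M r i = 0)
     \<and> (\<forall>r'\<in>{1..k-1}. r' \<noteq> r \<longrightarrow> M r' (ld r) = 0)"
      using r LD_row[OF L, of r] by auto
    show "(if r = k then 1 else Suc (ld r)) \<in> {1..Suc n}" using R by (cases "r = k") auto
    show "ext1 k M r (if r = k then 1 else Suc (ld r)) = 1" using R unfolding ext1_def by (cases "r = k") auto
    show "\<And>i. (if r = k then 1 else Suc (ld r)) < i \<Longrightarrow> ext1 k M r i = 0"
      using R Mk unfolding ext1_def by (cases "r = k") auto
    show "\<And>r'. r' \<in> {1..k} \<Longrightarrow> r' \<noteq> r \<Longrightarrow> ext1 k M r' (if r = k then 1 else Suc (ld r)) = 0"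
    proof -
      fix r' assume r': "r' \<in> {1..k}" "r' \<noteq> r"
      show "ext1 k M r' (if r = k then 1 else Suc (ld r)) = 0"
      proof (cases "r = k")
        case True then show ?thesis using r' unfolding ext1_def by auto
      next
        case False
        then show ?thesis using R r' Mk unfolding ext1_def by (cases "r' = k") auto
      qed
    qed
  next
    fix r r' assume "r \<in> {1..k}" "r' \<in> {1..k}" "r < r'"
    moreover have "r \<noteq> k \<Longrightarrow> ld r \<ge> 1" using LD_row[OF L, of r] \<open>r \<in> {1..k}\<close> by auto
    ultimately show "(if r' = k then 1 else Suc (ld r')) < (if r = k then 1 else Suc (ld r))"
      using LD_mono[OF L, of r r'] by auto
  qed
  show "lv k (ext1 k M) 1 = 1" using lv_iff[OF L2, of 1] k by auto
  show "sh (ext1 k M) = M" using B unfolding sh_def ext1_def BOX_def by (auto intro!: ext)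
qed

lemma ext0_sh: "BOX (Suc n) k M \<Longrightarrow> ext0 (col1 M) (sh M) = M"
  unfolding BOX_def ext0_def sh_def col1_def by (auto intro!: ext)

lemma ext1_sh: assumes "BOX (Suc n) k M" "LD (Suc n) k M ld" "lv k M 1 = 1" shows "ext1 k (sh M) = M"
proof -
  note S = sh_RREF1[OF assms]
  show ?thesis using assms(1) S(4,5) unfolding BOX_def ext1_def sh_def
    by (auto intro!: ext)
qed

definition cv :: "nat \<Rightarrow> ('a::field \<Rightarrow> nat) \<Rightarrow> nat \<Rightarrow> (nat \<Rightarrow> nat \<Rightarrow> 'a) \<Rightarrow> nat \<Rightarrow> nat" where
  "cv q enc k M i = (\<Sum>t\<in>{1..k}. enc (M t i) * q ^ (k - t))"
definition ev :: "nat \<Rightarrow> ('a::field \<Rightarrow> nat) \<Rightarrow> nat \<Rightarrow> (nat \<Rightarrow> nat \<Rightarrow> 'a) \<Rightarrow> nat \<Rightarrow> nat" where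
  "ev q enc k M i = lv k M i * q ^ k + cv q enc k M i"
definition df :: "nat \<Rightarrow> (nat \<Rightarrow> nat \<Rightarrow> 'a::field) \<Rightarrow> (nat \<Rightarrow> nat \<Rightarrow> 'a) \<Rightarrow> nat \<Rightarrow> bool" where
  "df k M N i = (lv k M i \<noteq> lv k N i \<or> (\<exists>t\<in>{1..k}. M t i \<noteq> N t i))"
definition ml :: "nat \<Rightarrow> ('a::field \<Rightarrow> nat) \<Rightarrow> nat \<Rightarrow> nat \<Rightarrow> (nat \<Rightarrow> nat \<Rightarrow> 'a) \<Rightarrow> (nat \<Rightarrow> nat \<Rightarrow> 'a) \<Rightarrow> bool" where
  "ml q enc n k M N = (\<exists>i\<in>{1..n}. df k M N i \<and> (\<forall>i'\<in>{1..<i}. \<not> df k M N i') \<and> ev q enc k M i < ev q enc k N i)"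

lemma lv01: "lv k M i = 0 \<or> lv k M i = 1" unfolding lv_def by auto

lemma lv_sh:
  assumes B: "BOX (Suc n) k M" and L: "LD (Suc n) k M ld" and i: "i \<ge> 1"
  shows "lv k M (Suc i) = lv (k - lv k M 1) (sh M) i"
proof (cases "lv k M 1 = 0")
  case True
  note S = sh_RREF0[OF B L True]
  have "(\<exists>r\<in>{1..k}. ld r = Suc i) \<longleftrightarrow> (\<exists>r\<in>{1..k}. ld r - 1 = i)" using S(3) by force
  then show ?thesis using lv_iff[OF L, of "Suc i"] lv_iff[OF S(2), of i] True by simp
next
  case False
  then have T: "lv k M 1 = 1" by (metis lv01)
  note S = sh_RREF1[OF B L T]
  have "(\<exists>r\<in>{1..k}. ld r = Suc i) \<longleftrightarrow> (\<exists>r\<in>{1..k-1}. ld r - 1 = i)"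
  proof
    assume "\<exists>r\<in>{1..k}. ld r = Suc i"
    then obtain r where r: "r \<in> {1..k}" "ld r = Suc i" by blast
    then have "r \<noteq> k" using S(2) i by auto
    then show "\<exists>r\<in>{1..k-1}. ld r - 1 = i" using r by (intro bexI[of _ r]) auto
  next
    assume "\<exists>r\<in>{1..k-1}. ld r - 1 = i"
    then obtain r where r: "r \<in> {1..k-1}" "ld r - 1 = i" by blast
    then have "ld r \<ge> 2" using S(3) by auto
    then show "\<exists>r\<in>{1..k}. ld r = Suc i" using r by (intro bexI[of _ r]) auto
  qed
  then show ?thesis using lv_iff[OF L, of "Suc i"] lv_iff[OF S(7), of i] T by simp
qed

lemma cv_sh:
  assumes B: "BOX (Suc n) k M" and L: "LD (Suc n) k M ld" and i: "i \<ge> 1" and e0: "enc 0 = 0"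
  shows "cv q enc k M (Suc i) = q ^ (lv k M 1) * cv q enc (k - lv k M 1) (sh M) i"
proof (cases "lv k M 1 = 0")
  case True
  then show ?thesis unfolding cv_def sh_def using i by simp
next
  case False
  then have T: "lv k M 1 = 1" by (metis lv01)
  note S = sh_RREF1[OF B L T]
  have k: "{1..k} = insert k {1..k-1}" "k \<notin> {1..k-1}" using S(1) by auto
  have "cv q enc k M (Suc i) = enc (M k (Suc i)) * q ^ (k - k) + (\<Sum>t\<in>{1..k-1}. enc (M t (Suc i)) * q ^ (k - t))"
    unfolding cv_def by (subst k(1), subst sum.insert) (use k in auto)
  also have "enc (M k (Suc i)) = 0" using S(4) i e0 by simp
  also have "(\<Sum>t\<in>{1..k-1}. enc (M t (Suc i)) * q ^ (k - t)) = (\<Sum>t\<in>{1..k-1}. q * (enc (sh M t i) * q ^ (k - 1 - t)))"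
  proof (rule sum.cong)
    fix t assume t: "t \<in> {1..k-1}"
    then have "k - t = Suc (k - 1 - t)" by auto
    then show "enc (M t (Suc i)) * q ^ (k - t) = q * (enc (sh M t i) * q ^ (k - 1 - t))"
      using i unfolding sh_def by simp
  qed simp
  finally show ?thesis using T unfolding cv_def by (simp add: sum_distrib_left)
qed

lemma ev_sh:
  assumes B: "BOX (Suc n) k M" and L: "LD (Suc n) k M ld" and i: "i \<ge> 1" and e0: "enc 0 = 0"
  shows "ev q enc k M (Suc i) = q ^ (lv k M 1) * ev q enc (k - lv k M 1) (sh M) i"
proof -
  have kk: "k = lv k M 1 + (k - lv k M 1)"
  proof (cases "lv k M 1 = 0")
    case False then have "lv k M 1 = 1" by (metis lv01)
    then show ?thesis using sh_RREF1(1)[OF B L] by simp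
  qed simp
  have "q ^ k = q ^ (lv k M 1) * q ^ (k - lv k M 1)" by (subst kk) (simp add: power_add)
  then show ?thesis unfolding ev_def using lv_sh[OF B L i] cv_sh[where enc=enc and q=q, OF B L i e0]
    by (simp add: algebra_simps)
qed

lemma ent_sh:
  assumes B: "BOX (Suc n) k M" and L: "LD (Suc n) k M ld"
    and B': "BOX (Suc n) k N" and L': "LD (Suc n) k N ld'" and v: "lv k M 1 = lv k N 1" and i: "i \<ge> 1"
  shows "(\<exists>t\<in>{1..k}. M t (Suc i) \<noteq> N t (Suc i)) \<longleftrightarrow> (\<exists>t\<in>{1..k - lv k M 1}. sh M t i \<noteq> sh N t i)"
proof (cases "lv k M 1 = 0")
  case True
  then show ?thesis unfolding sh_def using i by simp
next
  case False
  then have T: "lv k M 1 = 1" by (metis lv01)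
  note S = sh_RREF1[OF B L T] and S' = sh_RREF1[OF B' L'] 
  have "M k (Suc i) = 0" "N k (Suc i) = 0" using S(4) S'(4) v T i by auto
  have "(\<exists>t\<in>{1..k}. M t (Suc i) \<noteq> N t (Suc i)) \<longleftrightarrow> (\<exists>t\<in>{1..k-1}. M t (Suc i) \<noteq> N t (Suc i))"
  proof -
    have "{1..k} = insert k {1..k-1}" using S(1) by auto
    then show ?thesis using \<open>M k (Suc i) = 0\<close> \<open>N k (Suc i) = 0\<close> by auto
  qed
  then show ?thesis unfolding sh_def using T i by simp
qed

lemma df_sh:
  assumes B: "BOX (Suc n) k M" and L: "LD (Suc n) k M ld"
    and B': "BOX (Suc n) k N" and L': "LD (Suc n) k N ld'" and v: "lv k M 1 = lv k N 1" and i: "i \<ge> 1"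
  shows "df k M N (Suc i) \<longleftrightarrow> df (k - lv k M 1) (sh M) (sh N) i"
  unfolding df_def using ent_sh[OF assms] lv_sh[OF B L i] lv_sh[OF B' L' i] v by simp


definition SS :: "nat \<Rightarrow> nat \<Rightarrow> (nat \<Rightarrow> nat \<Rightarrow> 'a::field) set" where
  "SS n k = {M. is_RREF n k M}"

lemma finite_SS: "finite (SS n k :: (nat \<Rightarrow> nat \<Rightarrow> 'a::{finite,field}) set)"
proof -
  let ?A = "{1..k} \<times> {1..n}"
  let ?g = "\<lambda>(f::nat \<times> nat \<Rightarrow> 'a) r i. if r \<in> {1..k} \<and> i \<in> {1..n} then f (r, i) else 0"
  have "SS n k \<subseteq> ?g ` (PiE ?A (\<lambda>_. UNIV))"
  proof
    fix M :: "nat \<Rightarrow> nat \<Rightarrow> 'a" assume "M \<in> SS n k"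
    then have B: "BOX n k M" unfolding SS_def RREF_iff by auto
    have "M = ?g (restrict (\<lambda>(r, i). M r i) ?A)"
    proof (intro ext)
      fix r i
      show "M r i = ?g (restrict (\<lambda>(r, i). M r i) ?A) r i"
      proof (cases "r \<in> {1..k} \<and> i \<in> {1..n}")
        case True then show ?thesis by simp
      next
        case False
        then have "M r i = 0" using B unfolding BOX_def by blast
        then show ?thesis using False by simp
      qed
    qed
    moreover have "restrict (\<lambda>(r, i). M r i) ?A \<in> PiE ?A (\<lambda>_. UNIV)" by auto
    ultimately show "M \<in> ?g ` (PiE ?A (\<lambda>_. UNIV))" by (rule image_eqI)
  qed
  moreover have "finite (PiE ?A (\<lambda>_. UNIV :: 'a set))" by (intro finite_PiE) auto
  ultimately show ?thesis by (meson finite_imageI finite_subset)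
qed

lemma card_CC: "card (CC k :: (nat \<Rightarrow> 'a::{finite,zero}) set) = card (UNIV :: 'a set) ^ k"
proof -
  let ?g = "\<lambda>(f::nat \<Rightarrow> 'a) r. if r \<in> {1..k} then f r else 0"
  have e: "CC k = ?g ` (PiE {1..k} (\<lambda>_. UNIV))"
  proof
    show "CC k \<subseteq> ?g ` (PiE {1..k} (\<lambda>_. UNIV))"
    proof
      fix c :: "nat \<Rightarrow> 'a" assume "c \<in> CC k"
      then have "c = ?g (restrict c {1..k})"
      proof (intro ext)
        fix r assume "c \<in> CC k"
        show "c r = ?g (restrict c {1..k}) r"
        proof (cases "r \<in> {1..k}")
          case False
          then have "c r = 0" using \<open>c \<in> CC k\<close> unfolding CC_def by blast
          then show ?thesis using False by simp
        qed simp
      qed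
      moreover have "restrict c {1..k} \<in> PiE {1..k} (\<lambda>_. UNIV)" by simp
      ultimately show "c \<in> ?g ` (PiE {1..k} (\<lambda>_. UNIV))" by (rule image_eqI)
    qed
    show "?g ` (PiE {1..k} (\<lambda>_. UNIV)) \<subseteq> CC k"
    proof
      fix x assume "x \<in> ?g ` (PiE {1..k} (\<lambda>_. UNIV))"
      then obtain f where "x = ?g f" by blast
      then show "x \<in> CC k" unfolding CC_def by simp
    qed
  qed
  have inj: "inj_on ?g (PiE {1..k} (\<lambda>_. UNIV))"
  proof (rule inj_onI)
    fix f g :: "nat \<Rightarrow> 'a" assume a: "f \<in> PiE {1..k} (\<lambda>_. UNIV)" "g \<in> PiE {1..k} (\<lambda>_. UNIV)" "?g f = ?g g"
    show "f = g"
    proof (rule PiE_ext[OF a(1,2)])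
      fix x assume "x \<in> {1..k}"
      then show "f x = g x" using fun_cong[OF a(3), of x] by simp
    qed
  qed
  have "card (CC k :: (nat \<Rightarrow> 'a) set) = card (PiE {1..k} (\<lambda>_. UNIV :: 'a set))" by (subst e, rule card_image[OF inj])
  also have "\<dots> = (\<Prod>i\<in>{1..k}. card (UNIV :: 'a set))" by (rule card_PiE) simp
  finally show ?thesis by simp
qed

definition DD :: "nat \<Rightarrow> ('a \<Rightarrow> nat) \<Rightarrow> nat \<Rightarrow> (nat \<Rightarrow> 'a) \<Rightarrow> nat" where
  "DD q enc k c = (\<Sum>t\<in>{1..k}. enc (c t) * q ^ (k - t))"

lemma DD_Suc: "DD q enc (Suc k) c = q * DD q enc k c + enc (c (Suc k))"
proof -
  have "DD q enc (Suc k) c = (\<Sum>t\<in>{1..k}. enc (c t) * q ^ (Suc k - t)) + enc (c (Suc k))"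
    unfolding DD_def by simp
  also have "(\<Sum>t\<in>{1..k}. enc (c t) * q ^ (Suc k - t)) = (\<Sum>t\<in>{1..k}. q * (enc (c t) * q ^ (k - t)))"
    by (rule sum.cong) (auto simp: Suc_diff_le)
  finally show ?thesis unfolding DD_def by (simp add: sum_distrib_left)
qed

lemma DD_upd: "DD q enc k (c(Suc k := x)) = DD q enc k c"
  unfolding DD_def by (rule sum.cong) auto

lemma DD_bound: assumes "\<And>x. enc x < q" shows "DD q enc k c < q ^ k"
proof (induction k)
  case 0 then show ?case by (simp add: DD_def)
next
  case (Suc k)
  have "DD q enc (Suc k) c = q * DD q enc k c + enc (c (Suc k))" by (rule DD_Suc)
  also have "\<dots> < q * DD q enc k c + q" using assms by simp
  also have "\<dots> = q * (DD q enc k c + 1)" by simp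
  also have "\<dots> \<le> q * q ^ k" using Suc by (intro mult_le_mono2) simp
  finally show ?case by simp
qed

lemma DD_inj: assumes "\<And>x. enc x < q" "inj enc"
  shows "c \<in> CC k \<Longrightarrow> c' \<in> CC k \<Longrightarrow> DD q enc k c = DD q enc k c' \<Longrightarrow> c = c'"
proof (induction k arbitrary: c c')
  case 0 then show ?case unfolding CC_def by (auto intro!: ext)
next
  case (Suc k)
  let ?c0 = "c(Suc k := 0)" and ?d0 = "c'(Suc k := 0)"
  have cc: "?c0 \<in> CC k" "?d0 \<in> CC k" using Suc.prems unfolding CC_def by auto
  have e: "q * DD q enc k ?c0 + enc (c (Suc k)) = q * DD q enc k ?d0 + enc (c' (Suc k))"
    using Suc.prems(3) unfolding DD_Suc DD_upd .
  have "enc (c (Suc k)) = enc (c' (Suc k))"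
    using arg_cong[OF e, of "\<lambda>x. x mod q"] assms(1) by simp
  moreover have "q > 0" using assms(1) by (metis not_less0 neq0_conv)
  ultimately have "DD q enc k ?c0 = DD q enc k ?d0" using e by simp
  then have "?c0 = ?d0" using Suc.IH[OF cc] by blast
  moreover have "c (Suc k) = c' (Suc k)" using \<open>enc (c (Suc k)) = enc (c' (Suc k))\<close> assms(2) by (simp add: inj_eq)
  ultimately show ?case by (metis fun_upd_triv fun_upd_upd)
qed


lemma SS_iff: "M \<in> SS n k \<longleftrightarrow> BOX n k M \<and> (\<exists>ld. LD n k M ld)"
  unfolding SS_def RREF_iff by simp

lemma card_Z0:
  fixes P :: "(nat \<Rightarrow> 'a::field) \<Rightarrow> bool"
  shows "card {M \<in> SS (Suc n) k. lv k M 1 = 0 \<and> P (col1 M)} = card {c \<in> CC k. P c} * card (SS n k :: (nat \<Rightarrow> nat \<Rightarrow> 'a) set)"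
proof -
  let ?f = "\<lambda>(c::nat \<Rightarrow> 'a, M::nat \<Rightarrow> nat \<Rightarrow> 'a). ext0 c M"
  have e: "{M \<in> SS (Suc n) k. lv k M 1 = 0 \<and> P (col1 M)} = ?f ` ({c \<in> CC k. P c} \<times> SS n k)"
  proof
    show "{M \<in> SS (Suc n) k. lv k M 1 = 0 \<and> P (col1 M)} \<subseteq> ?f ` ({c \<in> CC k. P c} \<times> SS n k)"
    proof
      fix M assume M: "M \<in> {M \<in> SS (Suc n) k. lv k M 1 = 0 \<and> P (col1 M)}"
      then obtain ld where B: "BOX (Suc n) k M" and L: "LD (Suc n) k M ld" and v: "lv k M 1 = 0" and p: "P (col1 M)"
        unfolding SS_iff by auto
      note S = sh_RREF0[OF B L v]
      have "col1 M \<in> CC k" unfolding CC_def col1_def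
      proof (intro CollectI allI impI)
        fix r assume "r \<notin> {1..k}" then show "M r 1 = 0" using B unfolding BOX_def by blast
      qed
      moreover have "sh M \<in> SS n k" using S unfolding SS_iff by blast
      moreover have "M = ?f (col1 M, sh M)" using ext0_sh[OF B] by simp
      ultimately show "M \<in> ?f ` ({c \<in> CC k. P c} \<times> SS n k)" using p by blast
    qed
    show "?f ` ({c \<in> CC k. P c} \<times> SS n k) \<subseteq> {M \<in> SS (Suc n) k. lv k M 1 = 0 \<and> P (col1 M)}"
    proof
      fix x assume "x \<in> ?f ` ({c \<in> CC k. P c} \<times> SS n k)"
      then obtain y where "y \<in> {c \<in> CC k. P c} \<times> SS n k" "x = ?f y" by blast
      then obtain c M where x: "x = ext0 c M" and c: "c \<in> CC k" "P c" and M: "M \<in> SS n k" by auto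
      then obtain ld where B: "BOX n k M" and L: "LD n k M ld" unfolding SS_iff by blast
      note E = ext0_RREF[OF B L c(1)]
      show "x \<in> {M \<in> SS (Suc n) k. lv k M 1 = 0 \<and> P (col1 M)}" unfolding x SS_iff using E c by auto
    qed
  qed
  have inj: "inj_on ?f ({c \<in> CC k. P c} \<times> SS n k)"
  proof (rule inj_onI)
    fix x y assume x: "x \<in> {c \<in> CC k. P c} \<times> SS n k" and y: "y \<in> {c \<in> CC k. P c} \<times> SS n k" and e: "?f x = ?f y"
    obtain c M where xx: "x = (c, M)" by fastforce
    obtain c' M' where yy: "y = (c', M')" by fastforce
    have "c \<in> CC k" "M \<in> SS n k" using x xx by auto
    then obtain ld where "BOX n k M" "LD n k M ld" "c \<in> CC k" unfolding SS_iff by blast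
    note E = ext0_RREF[OF this]
    have "c' \<in> CC k" "M' \<in> SS n k" using y yy by auto
    then obtain ld' where "BOX n k M'" "LD n k M' ld'" "c' \<in> CC k" unfolding SS_iff by blast
    note E' = ext0_RREF[OF this]
    have "ext0 c M = ext0 c' M'" using e xx yy by simp
    then have "c = c'" "M = M'" using E(4,5) E'(4,5) by metis+
    then show "x = y" using xx yy by simp
  qed
  show ?thesis unfolding e card_image[OF inj] card_cartesian_product ..
qed

lemma Z1_empty: "k = 0 \<Longrightarrow> {M \<in> SS (Suc n) k. lv k M 1 = 1} = {}"
  unfolding lv_def by auto

lemma card_Z1:
  assumes k: "k \<ge> 1"
  shows "card {M \<in> (SS (Suc n) k :: (nat \<Rightarrow> nat \<Rightarrow> 'a::field) set). lv k M 1 = 1} = card (SS n (k-1) :: (nat \<Rightarrow> nat \<Rightarrow> 'a) set)"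
proof -
  have e: "{M \<in> SS (Suc n) k. lv k M 1 = 1} = ext1 k ` (SS n (k-1) :: (nat \<Rightarrow> nat \<Rightarrow> 'a) set)"
  proof
    show "{M \<in> SS (Suc n) k. lv k M 1 = 1} \<subseteq> ext1 k ` (SS n (k-1) :: (nat \<Rightarrow> nat \<Rightarrow> 'a) set)"
    proof
      fix M :: "nat \<Rightarrow> nat \<Rightarrow> 'a" assume M: "M \<in> {M \<in> SS (Suc n) k. lv k M 1 = 1}"
      then obtain ld where B: "BOX (Suc n) k M" and L: "LD (Suc n) k M ld" and v: "lv k M 1 = 1"
        unfolding SS_iff by auto
      note S = sh_RREF1[OF B L v]
      have "sh M \<in> SS n (k-1)" using S unfolding SS_iff by blast
      moreover have "M = ext1 k (sh M)" using ext1_sh[OF B L v] by simp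
      ultimately show "M \<in> ext1 k ` (SS n (k-1) :: (nat \<Rightarrow> nat \<Rightarrow> 'a) set)" by blast
    qed
    show "ext1 k ` (SS n (k-1) :: (nat \<Rightarrow> nat \<Rightarrow> 'a) set) \<subseteq> {M \<in> SS (Suc n) k. lv k M 1 = 1}"
    proof
      fix x assume "x \<in> ext1 k ` (SS n (k-1) :: (nat \<Rightarrow> nat \<Rightarrow> 'a) set)"
      then obtain M :: "nat \<Rightarrow> nat \<Rightarrow> 'a" where x: "x = ext1 k M" and M: "M \<in> SS n (k-1)" by blast
      then obtain ld where B: "BOX n (k-1) M" and L: "LD n (k-1) M ld" unfolding SS_iff by blast
      note E = ext1_RREF[OF B L k]
      show "x \<in> {M \<in> SS (Suc n) k. lv k M 1 = 1}" unfolding x SS_iff using E by auto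
    qed
  qed
  have inj: "inj_on (ext1 k) (SS n (k-1) :: (nat \<Rightarrow> nat \<Rightarrow> 'a) set)"
  proof (rule inj_onI)
    fix M M' :: "nat \<Rightarrow> nat \<Rightarrow> 'a" assume "M \<in> SS n (k-1)" "M' \<in> SS n (k-1)" and e: "ext1 k M = ext1 k M'"
    then obtain ld ld' where "BOX n (k-1) M" "LD n (k-1) M ld" "BOX n (k-1) M'" "LD n (k-1) M' ld'"
      unfolding SS_iff by blast
    then have "sh (ext1 k M) = M" "sh (ext1 k M') = M'" using ext1_RREF(4)[OF _ _ k] by blast+
    then show "M = M'" using e by metis
  qed
  show ?thesis unfolding e card_image[OF inj] ..
qed

lemma card_SS_Suc:
  "card (SS (Suc n) k :: (nat \<Rightarrow> nat \<Rightarrow> 'a::{finite,field}) set) =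
     card (UNIV :: 'a set) ^ k * card (SS n k :: (nat \<Rightarrow> nat \<Rightarrow> 'a) set)
     + (if k \<ge> 1 then card (SS n (k-1) :: (nat \<Rightarrow> nat \<Rightarrow> 'a) set) else 0)"
proof -
  let ?Z0 = "{M \<in> (SS (Suc n) k :: (nat \<Rightarrow> nat \<Rightarrow> 'a) set). lv k M 1 = 0 \<and> True}" and ?Z1 = "{M \<in> (SS (Suc n) k :: (nat \<Rightarrow> nat \<Rightarrow> 'a) set). lv k M 1 = 1}"
  have u: "(SS (Suc n) k :: (nat \<Rightarrow> nat \<Rightarrow> 'a) set) = ?Z0 \<union> ?Z1"
  proof (rule set_eqI)
    fix M :: "nat \<Rightarrow> nat \<Rightarrow> 'a"
    show "M \<in> SS (Suc n) k \<longleftrightarrow> M \<in> ?Z0 \<union> ?Z1" using lv01[of k M 1] by auto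
  qed
  have "card (SS (Suc n) k :: (nat \<Rightarrow> nat \<Rightarrow> 'a) set) = card ?Z0 + card ?Z1"
  proof -
    have f: "finite (SS (Suc n) k :: (nat \<Rightarrow> nat \<Rightarrow> 'a) set)" by (rule finite_SS)
    have "finite ?Z0" by (rule finite_subset[OF _ f]) blast
    moreover have "finite ?Z1" by (rule finite_subset[OF _ f]) blast
    moreover have "?Z0 \<inter> ?Z1 = {}" by auto
    ultimately show ?thesis by (subst u) (rule card_Un_disjoint)
  qed
  also have "card ?Z0 = card (CC k :: (nat \<Rightarrow> 'a) set) * card (SS n k :: (nat \<Rightarrow> nat \<Rightarrow> 'a) set)"
    using card_Z0[of n k "\<lambda>_. True"] by simp
  also have "card ?Z1 = (if k \<ge> 1 then card (SS n (k-1) :: (nat \<Rightarrow> nat \<Rightarrow> 'a) set) else 0)"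
  proof (cases "k \<ge> 1")
    case True then show ?thesis using card_Z1[of k n, where 'a='a] by simp
  next
    case False then have "k = 0" by simp
    then have e: "?Z1 = {}" using Z1_empty[of k n, where 'a='a] by blast
    show ?thesis by (subst e) (simp add: \<open>k = 0\<close>)
  qed
  finally show ?thesis by (simp add: card_CC)
qed


lemma gauss_nat: "gauss q m (int k) = (if k > m then 0 else (\<Prod>i<k. (real q ^ (m - i) - 1) / (real q ^ (k - i) - 1)))"
  by (simp add: gauss_def)

lemma qpow_ne1: assumes "q \<ge> 2" "j \<ge> 1" shows "real q ^ j - 1 \<noteq> 0"
proof -
  have "q ^ 1 \<le> q ^ j" using assms by (intro power_increasing) auto
  then have "2 \<le> q ^ j" using assms(1) by simp
  then have "(2::real) \<le> real (q ^ j)" by linarith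
  then show ?thesis by simp
qed

lemma gauss_diag: assumes q: "q \<ge> 2" shows "gauss q m (int m) = 1"
proof -
  have "(\<Prod>i<m. (real q ^ (m - i) - 1) / (real q ^ (m - i) - 1)) = (\<Prod>i<m. (1::real))"
  proof (rule prod.cong)
    fix i assume "i \<in> {..<m}"
    then have "m - i \<ge> 1" by auto
    then have "real q ^ (m - i) - 1 \<noteq> 0" using qpow_ne1[OF q] by blast
    then show "(real q ^ (m - i) - 1) / (real q ^ (m - i) - 1) = 1" by simp
  qed simp
  then show ?thesis unfolding gauss_nat by simp
qed

lemma gauss_rec:
  assumes q: "q \<ge> 2"
  shows "gauss q (Suc n) (int k) = real q ^ k * gauss q n (int k) + (if k \<ge> 1 then gauss q n (int (k - 1)) else 0)"
proof (cases k)
  case 0 then show ?thesis unfolding gauss_nat by simp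
next
  case (Suc k0)
  consider "k0 > n" | "k0 = n" | "k0 < n" by linarith
  then show ?thesis
  proof cases
    case 1 then show ?thesis using Suc unfolding gauss_nat by simp
  next
    case 2
    have "gauss q n (int (Suc n)) = 0" unfolding gauss_nat by simp
    then show ?thesis using Suc 2 gauss_diag[OF q, of n] gauss_diag[OF q, of "Suc n"] by simp
  next
    case 3
    define N where "N m j = (\<Prod>i<j. (real q ^ (m - i) - 1))" for m j
    define D where "D j = (\<Prod>i<j. (real q ^ (j - i) - 1))" for j
    have G: "gauss q m (int j) = N m j / D j" if "j \<le> m" for m j
      using that unfolding gauss_nat N_def D_def by (simp add: prod_dividef)
    have ne: "real q ^ j - 1 \<noteq> 0" if "j \<ge> 1" for j using qpow_ne1[OF q that] .
    have Dnz: "D j \<noteq> 0" for j unfolding D_def using ne by (simp add: prod_zero_iff)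
    have N1: "N (Suc n) (Suc k0) = (real q ^ Suc n - 1) * N n k0"
      unfolding N_def by (subst prod.lessThan_Suc_shift) simp
    have D1: "D (Suc k0) = (real q ^ Suc k0 - 1) * D k0"
      unfolding D_def by (subst prod.lessThan_Suc_shift) simp
    have N2: "N n (Suc k0) = N n k0 * (real q ^ (n - k0) - 1)"
      unfolding N_def by simp
    have key: "real q ^ Suc n - 1 = real q ^ Suc k0 * (real q ^ (n - k0) - 1) + (real q ^ Suc k0 - 1)"
    proof -
      have e: "Suc k0 + (n - k0) = Suc n" using 3 by simp
      have "real q ^ Suc k0 * real q ^ (n - k0) = real q ^ Suc n"
        by (simp only: power_add[symmetric] e)
      then show ?thesis by (simp only: right_diff_distrib mult_1_right)
    qed
    have a: "real q ^ Suc k0 - 1 \<noteq> 0" using ne[of "Suc k0"] by simp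
    have "gauss q (Suc n) (int k) = N (Suc n) (Suc k0) / D (Suc k0)" using G[of "Suc k0" "Suc n"] Suc 3 by simp
    also have "\<dots> = (real q ^ Suc n - 1) * N n k0 / ((real q ^ Suc k0 - 1) * D k0)" unfolding N1 D1 ..
    also have "\<dots> = real q ^ Suc k0 * (N n k0 * (real q ^ (n - k0) - 1) / ((real q ^ Suc k0 - 1) * D k0)) + N n k0 / D k0"
      unfolding key using a Dnz[of k0] by (simp add: field_simps)
    also have "\<dots> = real q ^ k * gauss q n (int k) + gauss q n (int (k - 1))"
      using G[of "Suc k0" n] G[of k0 n] Suc 3 N2 D1 by simp
    finally show ?thesis using Suc by simp
  qed
qed

lemma card_SS_gauss:
  "real (card (SS n k :: (nat \<Rightarrow> nat \<Rightarrow> 'a::{finite,field}) set)) = gauss (card (UNIV :: 'a set)) n (int k)"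
proof (induction n arbitrary: k)
  case 0
  show ?case
  proof (cases k)
    case 0
    have "(SS 0 0 :: (nat \<Rightarrow> nat \<Rightarrow> 'a) set) = {\<lambda>_ _. 0}"
    proof (rule set_eqI)
      fix M :: "nat \<Rightarrow> nat \<Rightarrow> 'a"
      show "M \<in> SS 0 0 \<longleftrightarrow> M \<in> {\<lambda>_ _. 0}" unfolding SS_iff BOX_def LD_def by (auto intro!: ext)
    qed
    then show ?thesis using 0 unfolding gauss_nat by simp
  next
    case (Suc k0)
    have "(SS 0 k :: (nat \<Rightarrow> nat \<Rightarrow> 'a) set) = {}"
    proof (rule set_eqI)
      fix M :: "nat \<Rightarrow> nat \<Rightarrow> 'a"
      have "\<not> LD 0 k M ld" for ld using Suc unfolding LD_def by auto
      then show "M \<in> SS 0 k \<longleftrightarrow> M \<in> {}" unfolding SS_iff by auto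
    qed
    then show ?thesis using Suc unfolding gauss_nat by simp
  qed
next
  case (Suc n)
  have q: "card (UNIV :: 'a set) \<ge> 2"
  proof -
    have "card {0::'a, 1} = 2" by simp
    moreover have "card {0::'a, 1} \<le> card (UNIV :: 'a set)" by (rule card_mono) auto
    ultimately show ?thesis by simp
  qed
  show ?case unfolding card_SS_Suc[of n k, where 'a='a] gauss_rec[OF q] using Suc.IH by simp
qed


lemma sum_Suc_split: "(\<Sum>j\<in>{1..Suc m}. f j) = f 1 + (\<Sum>j\<in>{1..m}. f (Suc j))"
proof -
  have "(\<Sum>j\<in>{1..Suc m}. f j) = f 1 + (\<Sum>j\<in>{Suc 1..Suc m}. f j)" by (rule sum.atLeast_Suc_atMost) simp
  also have "(\<Sum>j\<in>{Suc 1..Suc m}. f j) = (\<Sum>j\<in>{1..m}. f (Suc j))" by (rule sum.shift_bounds_cl_Suc_ivl)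
  finally show ?thesis .
qed

definition ws :: "nat \<Rightarrow> (nat \<Rightarrow> nat \<Rightarrow> 'a::field) \<Rightarrow> nat \<Rightarrow> nat" where
  "ws k M j = (\<Sum>l\<in>{1..j}. lv k M l)"

definition TT :: "nat \<Rightarrow> ('a::field \<Rightarrow> nat) \<Rightarrow> nat \<Rightarrow> nat \<Rightarrow> (nat \<Rightarrow> nat \<Rightarrow> 'a) \<Rightarrow> nat \<Rightarrow> real" where
  "TT q enc n k M j = (real (lv k M j) * real q ^ (k - ws k M (j - 1))
        + (1 - real (lv k M j)) * real (cv q enc k M j) / real q ^ (ws k M (j - 1)))
       * gauss q (n - j) (int k - int (ws k M (j - 1)))"

lemma ws_sh:
  assumes B: "BOX (Suc n) k M" and L: "LD (Suc n) k M ld"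
  shows "ws k M (Suc j) = lv k M 1 + ws (k - lv k M 1) (sh M) j"
proof -
  have "ws k M (Suc j) = lv k M 1 + (\<Sum>l\<in>{1..j}. lv k M (Suc l))" unfolding ws_def by (rule sum_Suc_split)
  also have "(\<Sum>l\<in>{1..j}. lv k M (Suc l)) = ws (k - lv k M 1) (sh M) j"
    unfolding ws_def by (rule sum.cong) (use lv_sh[OF B L] in auto)
  finally show ?thesis .
qed

lemma lv1_le: assumes B: "BOX (Suc n) k M" and L: "LD (Suc n) k M ld" shows "lv k M 1 \<le> k"
proof (cases "lv k M 1 = 0")
  case False then have "lv k M 1 = 1" by (metis lv01)
  then show ?thesis using sh_RREF1(1)[OF B L] by simp
qed simp

lemma TT_sh:
  assumes B: "BOX (Suc n) k M" and L: "LD (Suc n) k M ld" and e0: "enc 0 = 0" and q: "q > 0" and j: "j \<ge> 1"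
  shows "TT q enc (Suc n) k M (Suc j) = TT q enc n (k - lv k M 1) (sh M) j"
proof -
  let ?v = "lv k M 1" and ?k' = "k - lv k M 1"
  have w: "ws k M j = ?v + ws ?k' (sh M) (j - 1)" using ws_sh[OF B L, of "j - 1"] j by simp
  have l: "lv k M (Suc j) = lv ?k' (sh M) j" using lv_sh[OF B L j] .
  have c: "cv q enc k M (Suc j) = q ^ ?v * cv q enc ?k' (sh M) j" using cv_sh[where enc=enc and q=q, OF B L j e0] .
  have vk: "?v \<le> k" by (rule lv1_le[OF B L])
  have e1: "k - ws k M j = ?k' - ws ?k' (sh M) (j - 1)" unfolding w by simp
  have e2: "int k - int (ws k M j) = int ?k' - int (ws ?k' (sh M) (j - 1))" unfolding w using vk by simp
  have e3: "x * real (cv q enc k M (Suc j)) / real q ^ ws k M j = x * real (cv q enc ?k' (sh M) j) / real q ^ ws ?k' (sh M) (j - 1)" for x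
    unfolding c w using q by (simp add: power_add)
  show ?thesis unfolding TT_def using l e1 e2 e3 by simp
qed

lemma FF_sh:
  assumes B: "BOX (Suc n) k M" and L: "LD (Suc n) k M ld" and e0: "enc 0 = 0" and q: "q > 0"
  shows "(\<Sum>j\<in>{1..Suc n}. TT q enc (Suc n) k M j) = TT q enc (Suc n) k M 1 + (\<Sum>j\<in>{1..n}. TT q enc n (k - lv k M 1) (sh M) j)"
  unfolding sum_Suc_split by (rule arg_cong[where f="\<lambda>x. _ + x"], rule sum.cong) (use TT_sh[where enc=enc and q=q, OF B L e0 q] in auto)

lemma ndf_ev: "\<not> df k Y X i \<Longrightarrow> ev q enc k Y i = ev q enc k X i"
  unfolding df_def ev_def cv_def by (auto intro!: sum.cong)

lemma cv_DD: "cv q enc k M 1 = DD q enc k (col1 M)"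
  unfolding cv_def DD_def col1_def ..

lemma card_B:
  assumes X: "X \<in> SS (Suc n) k"
  shows "card {Y \<in> SS (Suc n) k. \<not> df k Y X 1 \<and> Q (sh Y)} = card {Y' \<in> SS n (k - lv k X 1). Q Y'}"
proof -
  obtain ldX where BX: "BOX (Suc n) k X" and LX: "LD (Suc n) k X ldX" using X unfolding SS_iff by blast
  let ?L = "{Y \<in> SS (Suc n) k. \<not> df k Y X 1 \<and> Q (sh Y)}" and ?k' = "k - lv k X 1"
  have colX: "col1 X \<in> CC k" unfolding CC_def col1_def
  proof (intro CollectI allI impI)
    fix r assume "r \<notin> {1..k}" then show "X r 1 = 0" using BX unfolding BOX_def by blast
  qed
  have pr: "lv k Y 1 = lv k X 1 \<and> col1 Y = col1 X" if "Y \<in> ?L" for Y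
  proof -
    have BY: "BOX (Suc n) k Y" using that unfolding SS_iff by blast
    have nd: "\<not> df k Y X 1" using that by blast
    have "col1 Y = col1 X"
    proof
      fix t show "col1 Y t = col1 X t"
      proof (cases "t \<in> {1..k}")
        case True then show ?thesis using nd unfolding df_def col1_def by blast
      next
        case False then show ?thesis using BY BX unfolding BOX_def col1_def by simp
      qed
    qed
    then show ?thesis using nd unfolding df_def by blast
  qed
  have bk: "Y = (if lv k X 1 = 0 then ext0 (col1 X) (sh Y) else ext1 k (sh Y))" if YL: "Y \<in> ?L" for Y
  proof -
    obtain ld where BY: "BOX (Suc n) k Y" and LY: "LD (Suc n) k Y ld" using YL unfolding SS_iff by blast
    show ?thesis
    proof (cases "lv k X 1 = 0")
      case True then show ?thesis using ext0_sh[OF BY] pr[OF YL] by simp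
    next
      case False then have "lv k Y 1 = 1" using pr[OF YL] by (metis lv01)
      then show ?thesis using ext1_sh[OF BY LY] False by simp
    qed
  qed
  have inj: "inj_on sh ?L"
  proof (rule inj_onI)
    fix Y Z assume a: "Y \<in> ?L" "Z \<in> ?L" "sh Y = sh Z"
    let ?G = "\<lambda>W. if lv k X 1 = 0 then ext0 (col1 X) W else ext1 k W"
    have "Y = ?G (sh Y)" by (rule bk[OF a(1)])
    also have "\<dots> = ?G (sh Z)" using a(3) by (rule arg_cong)
    also have "\<dots> = Z" by (rule bk[OF a(2), symmetric])
    finally show "Y = Z" .
  qed
  have img: "sh ` ?L = {Y' \<in> SS n ?k'. Q Y'}"
  proof
    show "sh ` ?L \<subseteq> {Y' \<in> SS n ?k'. Q Y'}"
    proof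
      fix x assume "x \<in> sh ` ?L"
      then obtain Y where Y: "Y \<in> ?L" and x: "x = sh Y" by blast
      obtain ld where BY: "BOX (Suc n) k Y" and LY: "LD (Suc n) k Y ld" using Y unfolding SS_iff by blast
      have "sh Y \<in> SS n ?k'"
      proof (cases "lv k Y 1 = 0")
        case True then show ?thesis using sh_RREF0[OF BY LY True] pr[OF Y] unfolding SS_iff by auto
      next
        case False then have "lv k Y 1 = 1" by (metis lv01)
        then show ?thesis using sh_RREF1[OF BY LY] pr[OF Y] unfolding SS_iff by auto
      qed
      then show "x \<in> {Y' \<in> SS n ?k'. Q Y'}" using Y x by blast
    qed
    show "{Y' \<in> SS n ?k'. Q Y'} \<subseteq> sh ` ?L"
    proof
      fix Y' assume Y': "Y' \<in> {Y' \<in> SS n ?k'. Q Y'}"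
      show "Y' \<in> sh ` ?L"
      proof (cases "lv k X 1 = 0")
        case True
        obtain ld where B': "BOX n k Y'" "LD n k Y' ld" using Y' True unfolding SS_iff by auto
        note E = ext0_RREF[OF B' colX]
        let ?Y = "ext0 (col1 X) Y'"
        have "\<forall>t. ?Y t 1 = X t 1"
        proof
          fix t show "?Y t 1 = X t 1" using fun_cong[OF E(5), of t] unfolding col1_def by simp
        qed
        then have "\<not> df k ?Y X 1" unfolding df_def using E(3) True by simp
        moreover have "?Y \<in> SS (Suc n) k" unfolding SS_iff using E by blast
        ultimately have "?Y \<in> ?L" using E(4) Y' by simp
        show ?thesis
        proof (rule image_eqI)
          show "Y' = sh ?Y" using E(4) by simp
          show "?Y \<in> ?L" by fact
        qed
      next
        case False then have v1: "lv k X 1 = 1" by (metis lv01)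
        note SX = sh_RREF1[OF BX LX v1]
        obtain ld where B': "BOX n (k-1) Y'" "LD n (k-1) Y' ld" using Y' v1 unfolding SS_iff by auto
        note E = ext1_RREF[OF B' SX(1)]
        let ?Y = "ext1 k Y'"
        have "\<forall>t. ?Y t 1 = X t 1" using SX(4,5) unfolding ext1_def by auto
        then have "\<not> df k ?Y X 1" unfolding df_def using E(3) v1 by simp
        moreover have "?Y \<in> SS (Suc n) k" unfolding SS_iff using E by blast
        ultimately have "?Y \<in> ?L" using E(4) Y' by simp
        show ?thesis
        proof (rule image_eqI)
          show "Y' = sh ?Y" using E(4) by simp
          show "?Y \<in> ?L" by fact
        qed
      qed
    qed
  qed
  show ?thesis using card_image[OF inj] img by simp
qed


locale encq =
  fixes enc :: "'a::{finite,field} \<Rightarrow> nat" and q :: nat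
  assumes qdef: "q = card (UNIV :: 'a set)" and bij: "bij_betw enc UNIV {0..<q}"
    and e0: "enc 0 = 0" and e1: "enc 1 = 1"
begin

lemma enc_lt: "enc x < q" using bij unfolding bij_betw_def by auto
lemma enc_inj: "inj enc" using bij unfolding bij_betw_def by auto
lemma q2: "q \<ge> 2"
proof -
  have "card {0::'a, 1} = 2" by simp
  moreover have "card {0::'a, 1} \<le> card (UNIV :: 'a set)" by (rule card_mono) auto
  ultimately show ?thesis using qdef by simp
qed

lemma DD_img: "DD q enc k ` (CC k :: (nat \<Rightarrow> 'a) set) = {0..<q ^ k}"
proof (rule card_subset_eq)
  show "finite {0..<q ^ k}" by simp
  show "DD q enc k ` (CC k :: (nat \<Rightarrow> 'a) set) \<subseteq> {0..<q ^ k}" using DD_bound[of enc q, OF enc_lt] by auto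
  have inj: "inj_on (DD q enc k) (CC k :: (nat \<Rightarrow> 'a) set)"
    by (rule inj_onI) (rule DD_inj[of enc q, OF enc_lt enc_inj])
  show "card (DD q enc k ` (CC k :: (nat \<Rightarrow> 'a) set)) = card {0..<q ^ k}"
    using card_image[OF inj] card_CC[of k, where 'a='a] qdef by simp
qed

lemma card_DD_less: "card {c \<in> (CC k :: (nat \<Rightarrow> 'a) set). DD q enc k c < N} = min N (q ^ k)"
proof -
  let ?S = "{c \<in> (CC k :: (nat \<Rightarrow> 'a) set). DD q enc k c < N}"
  have inj: "inj_on (DD q enc k) ?S"
    by (rule inj_onI) (rule DD_inj[of enc q, OF enc_lt enc_inj], auto)
  have "DD q enc k ` ?S = {x \<in> DD q enc k ` (CC k :: (nat \<Rightarrow> 'a) set). x < N}" by blast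
  also have "\<dots> = {0..<min N (q ^ k)}" unfolding DD_img by auto
  finally show ?thesis using card_image[OF inj] by simp
qed

lemma cv_lt: "cv q enc k M i < q ^ k"
  unfolding cv_def using DD_bound[of enc q k "\<lambda>t. M t i", OF enc_lt] unfolding DD_def .

lemma cv_e: assumes B: "BOX (Suc n) k M" and L: "LD (Suc n) k M ld" and v: "lv k M 1 = 1"
  shows "cv q enc k M 1 = 1"
proof -
  note S = sh_RREF1[OF B L v]
  have "cv q enc k M 1 = (\<Sum>t\<in>{1..k}. if t = k then 1 else 0)"
    unfolding cv_def by (rule sum.cong) (use S(4,5) e0 e1 in auto)
  also have "\<dots> = 1" using S(1) by simp
  finally show ?thesis .
qed

lemma ev1_ge: assumes B: "BOX (Suc n) k Y" and L: "LD (Suc n) k Y ld" and v: "lv k Y 1 = 1"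
  and BX: "BOX (Suc n) k X" and LX: "LD (Suc n) k X ldX"
  shows "ev q enc k X 1 \<le> ev q enc k Y 1"
proof -
  have "ev q enc k Y 1 = q ^ k + 1" unfolding ev_def using cv_e[OF B L v] v by simp
  moreover have "ev q enc k X 1 \<le> q ^ k + 1"
  proof (cases "lv k X 1 = 0")
    case True then show ?thesis unfolding ev_def using cv_lt[of k X 1] by simp
  next
    case False then have "lv k X 1 = 1" by (metis lv01)
    then show ?thesis unfolding ev_def using cv_e[OF BX LX] by simp
  qed
  ultimately show ?thesis by simp
qed

lemma ml_split:
  assumes X: "X \<in> SS (Suc n) k" and Y: "Y \<in> SS (Suc n) k"
  shows "ml q enc (Suc n) k Y X \<longleftrightarrow>
     (lv k Y 1 = 0 \<and> DD q enc k (col1 Y) < ev q enc k X 1) \<or>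
     (\<not> df k Y X 1 \<and> ml q enc n (k - lv k X 1) (sh Y) (sh X))"
proof -
  obtain ldX where BX: "BOX (Suc n) k X" and LX: "LD (Suc n) k X ldX" using X unfolding SS_iff by blast
  obtain ld where BY: "BOX (Suc n) k Y" and LY: "LD (Suc n) k Y ld" using Y unfolding SS_iff by blast
  have qp: "0 < q ^ m" for m using q2 by simp
  have shift: "df k Y X (Suc i) \<longleftrightarrow> df (k - lv k X 1) (sh Y) (sh X) i"
    "ev q enc k Y (Suc i) < ev q enc k X (Suc i) \<longleftrightarrow> ev q enc (k - lv k X 1) (sh Y) i < ev q enc (k - lv k X 1) (sh X) i"
    if nd: "\<not> df k Y X 1" and i: "i \<ge> 1" for i
  proof -
    have v: "lv k Y 1 = lv k X 1" using nd unfolding df_def by blast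
    show "df k Y X (Suc i) \<longleftrightarrow> df (k - lv k X 1) (sh Y) (sh X) i" using df_sh[OF BY LY BX LX v i] v by simp
    show "ev q enc k Y (Suc i) < ev q enc k X (Suc i) \<longleftrightarrow> ev q enc (k - lv k X 1) (sh Y) i < ev q enc (k - lv k X 1) (sh X) i"
      using ev_sh[where enc=enc and q=q, OF BY LY i e0] ev_sh[where enc=enc and q=q, OF BX LX i e0] v qp by simp
  qed
  show ?thesis
  proof
    assume "ml q enc (Suc n) k Y X"
    then obtain i where i: "i \<in> {1..Suc n}" and d: "df k Y X i" and f: "\<forall>i'\<in>{1..<i}. \<not> df k Y X i'"
      and l: "ev q enc k Y i < ev q enc k X i" unfolding ml_def by blast
    show "(lv k Y 1 = 0 \<and> DD q enc k (col1 Y) < ev q enc k X 1) \<or>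
     (\<not> df k Y X 1 \<and> ml q enc n (k - lv k X 1) (sh Y) (sh X))"
    proof (cases "i = 1")
      case True
      have l0: "lv k Y 1 = 0"
      proof (rule ccontr)
        assume "lv k Y 1 \<noteq> 0" then have "lv k Y 1 = 1" by (metis lv01)
        then show False using ev1_ge[OF BY LY _ BX LX] l True by simp
      qed
      have "ev q enc k Y 1 = DD q enc k (col1 Y)" using l0 unfolding ev_def cv_DD by simp
      moreover have "ev q enc k Y 1 < ev q enc k X 1" using l unfolding True .
      ultimately have "DD q enc k (col1 Y) < ev q enc k X 1" by simp
      then show ?thesis using l0 by blast
    next
      case False
      then obtain i0 where i0: "i = Suc i0" "i0 \<ge> 1" using i by (metis atLeastAtMost_iff le_antisym not_less_eq_eq Suc_pred' less_eq_Suc_le not_le zero_less_iff_neq_zero)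
      have nd: "\<not> df k Y X 1" using f i0 by auto
      have "ml q enc n (k - lv k X 1) (sh Y) (sh X)" unfolding ml_def
      proof (intro bexI conjI ballI)
        show "i0 \<in> {1..n}" using i i0 by auto
        show "df (k - lv k X 1) (sh Y) (sh X) i0" using d shift(1)[OF nd i0(2)] i0 by simp
        show "ev q enc (k - lv k X 1) (sh Y) i0 < ev q enc (k - lv k X 1) (sh X) i0" using l shift(2)[OF nd i0(2)] i0 by simp
        fix i' assume i': "i' \<in> {1..<i0}"
        then have "\<not> df k Y X (Suc i')" using f i0 by auto
        then show "\<not> df (k - lv k X 1) (sh Y) (sh X) i'" using shift(1)[OF nd] i' by auto
      qed
      then show ?thesis using nd by blast
    qed
  next
    assume "(lv k Y 1 = 0 \<and> DD q enc k (col1 Y) < ev q enc k X 1) \<or>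
     (\<not> df k Y X 1 \<and> ml q enc n (k - lv k X 1) (sh Y) (sh X))"
    then show "ml q enc (Suc n) k Y X"
    proof
      assume a: "lv k Y 1 = 0 \<and> DD q enc k (col1 Y) < ev q enc k X 1"
      then have l: "ev q enc k Y 1 < ev q enc k X 1" unfolding ev_def cv_DD by simp
      then have "df k Y X 1" using ndf_ev by (metis less_irrefl)
      then show ?thesis unfolding ml_def using l by (intro bexI[of _ 1]) auto
    next
      assume a: "\<not> df k Y X 1 \<and> ml q enc n (k - lv k X 1) (sh Y) (sh X)"
      then obtain i0 where i0: "i0 \<in> {1..n}" and d: "df (k - lv k X 1) (sh Y) (sh X) i0"
        and f: "\<forall>i'\<in>{1..<i0}. \<not> df (k - lv k X 1) (sh Y) (sh X) i'"
        and l: "ev q enc (k - lv k X 1) (sh Y) i0 < ev q enc (k - lv k X 1) (sh X) i0" unfolding ml_def by blast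
      have nd: "\<not> df k Y X 1" using a by blast
      have i01: "i0 \<ge> 1" using i0 by simp
      show ?thesis unfolding ml_def
      proof (intro bexI[of _ "Suc i0"] conjI ballI)
        show "Suc i0 \<in> {1..Suc n}" using i0 by auto
        show "df k Y X (Suc i0)" using d shift(1)[OF nd i01] by simp
        show "ev q enc k Y (Suc i0) < ev q enc k X (Suc i0)" using l shift(2)[OF nd i01] by simp
        fix i' assume i': "i' \<in> {1..<Suc i0}"
        show "\<not> df k Y X i'"
        proof (cases "i' = 1")
          case True then show ?thesis using nd by simp
        next
          case False
          then obtain i'' where "i' = Suc i''" "i'' \<ge> 1" "i'' < i0" using i' by (cases i') auto
          then show ?thesis using f shift(1)[OF nd] by auto
        qed
      qed
    qed
  qed
qed


lemma TT1: assumes "X \<in> SS (Suc n) k"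
  shows "TT q enc (Suc n) k X 1 = real (min (ev q enc k X 1) (q ^ k)) * gauss q n (int k)"
proof -
  have w: "ws k X 0 = 0" unfolding ws_def by simp
  have "real (lv k X 1) * real q ^ k + (1 - real (lv k X 1)) * real (cv q enc k X 1) = real (min (ev q enc k X 1) (q ^ k))"
  proof (cases "lv k X 1 = 0")
    case True then show ?thesis unfolding ev_def using cv_lt[of k X 1] by simp
  next
    case False then have "lv k X 1 = 1" by (metis lv01)
    then show ?thesis unfolding ev_def by simp
  qed
  then show ?thesis unfolding TT_def by (simp add: w)
qed

lemma main: "X \<in> SS n k \<Longrightarrow> real (card {Y \<in> SS n k. ml q enc n k Y X}) = (\<Sum>j\<in>{1..n}. TT q enc n k X j)"
proof (induction n arbitrary: k X)
  case 0
  then show ?case unfolding ml_def by simp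
next
  case (Suc n)
  note X = Suc.prems
  obtain ldX where BX: "BOX (Suc n) k X" and LX: "LD (Suc n) k X ldX" using X unfolding SS_iff by blast
  define e where "e = ev q enc k X 1"
  define k' where "k' = k - lv k X 1"
  define A where "A = {Y \<in> (SS (Suc n) k :: (nat \<Rightarrow> nat \<Rightarrow> 'a) set). lv k Y 1 = 0 \<and> DD q enc k (col1 Y) < e}"
  define B where "B = {Y \<in> (SS (Suc n) k :: (nat \<Rightarrow> nat \<Rightarrow> 'a) set). \<not> df k Y X 1 \<and> ml q enc n k' (sh Y) (sh X)}"
  have U: "{Y \<in> SS (Suc n) k. ml q enc (Suc n) k Y X} = A \<union> B"
  proof (rule set_eqI)
    fix Y :: "nat \<Rightarrow> nat \<Rightarrow> 'a"
    show "Y \<in> {Y \<in> SS (Suc n) k. ml q enc (Suc n) k Y X} \<longleftrightarrow> Y \<in> A \<union> B"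
      unfolding A_def B_def e_def k'_def using ml_split[OF X, of Y] by blast
  qed
  have disj: "A \<inter> B = {}"
  proof (rule ccontr)
    assume "A \<inter> B \<noteq> {}"
    then obtain Y where "Y \<in> A" "Y \<in> B" by blast
    then have "lv k Y 1 = 0" "DD q enc k (col1 Y) < e" "\<not> df k Y X 1" unfolding A_def B_def by auto
    then show False using ndf_ev[of k Y X 1 q enc] unfolding e_def ev_def cv_DD by simp
  qed
  have f: "finite (SS (Suc n) k :: (nat \<Rightarrow> nat \<Rightarrow> 'a) set)" by (rule finite_SS)
  have fA: "finite A" unfolding A_def by (rule finite_subset[OF _ f]) blast
  have fB: "finite B" unfolding B_def by (rule finite_subset[OF _ f]) blast
  have cA: "card A = min e (q ^ k) * card (SS n k :: (nat \<Rightarrow> nat \<Rightarrow> 'a) set)"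
    unfolding A_def using card_Z0[of n k "\<lambda>c. DD q enc k c < e"] card_DD_less[of k e] by simp
  have cB: "card B = card {Y' \<in> (SS n k' :: (nat \<Rightarrow> nat \<Rightarrow> 'a) set). ml q enc n k' Y' (sh X)}"
    unfolding B_def k'_def by (rule card_B[OF X])
  have shX: "sh X \<in> SS n k'"
  proof (cases "lv k X 1 = 0")
    case True then show ?thesis using sh_RREF0[OF BX LX True] unfolding k'_def SS_iff by auto
  next
    case False then have "lv k X 1 = 1" by (metis lv01)
    then show ?thesis using sh_RREF1[OF BX LX] unfolding k'_def SS_iff by auto
  qed
  have "real (card {Y \<in> SS (Suc n) k. ml q enc (Suc n) k Y X}) = real (card A) + real (card B)"
    unfolding U card_Un_disjoint[OF fA fB disj] by simp
  also have "real (card A) = real (min e (q ^ k)) * gauss q n (int k)"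
    unfolding cA using card_SS_gauss[of n k, where 'a='a] qdef by simp
  also have "real (card B) = (\<Sum>j\<in>{1..n}. TT q enc n k' (sh X) j)"
    unfolding cB by (rule Suc.IH[OF shX])
  also have "real (min e (q ^ k)) * gauss q n (int k) = TT q enc (Suc n) k X 1"
    unfolding e_def by (rule TT1[OF X, symmetric])
  also have "TT q enc (Suc n) k X 1 + (\<Sum>j\<in>{1..n}. TT q enc n k' (sh X) j) = (\<Sum>j\<in>{1..Suc n}. TT q enc (Suc n) k X j)"
    unfolding k'_def using FF_sh[where enc=enc and q=q, OF BX LX e0] q2 by simp
  finally show ?case .
qed

end


section \<open>Linear algebra: subspaces versus reduced row echelon matrices\<close>

lemma rs_add: "x \<in> rowspan k B \<Longrightarrow> y \<in> rowspan k B \<Longrightarrow> (\<lambda>i. x i + y i) \<in> rowspan k B"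
proof -
  assume "x \<in> rowspan k B" "y \<in> rowspan k B"
  then obtain c d where x: "x = (\<lambda>i. \<Sum>r\<in>{1..k}. c r * B r i)" and y: "y = (\<lambda>i. \<Sum>r\<in>{1..k}. d r * B r i)"
    unfolding rowspan_def by blast
  have h: "(\<lambda>i. x i + y i) = (\<lambda>i. \<Sum>r\<in>{1..k}. (c r + d r) * B r i)"
    unfolding x y by (simp add: sum.distrib distrib_right)
  show ?thesis unfolding rowspan_def by (rule CollectI, rule exI[where x="\<lambda>r. c r + d r"], simp add: h)
qed

lemma rs_scale: "x \<in> rowspan k B \<Longrightarrow> (\<lambda>i. a * x i) \<in> rowspan k B"
proof -
  assume "x \<in> rowspan k B"
  then obtain c where x: "x = (\<lambda>i. \<Sum>r\<in>{1..k}. c r * B r i)" unfolding rowspan_def by blast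
  have h: "(\<lambda>i. a * x i) = (\<lambda>i. \<Sum>r\<in>{1..k}. (a * c r) * B r i)"
    unfolding x by (simp add: sum_distrib_left mult.assoc)
  show ?thesis unfolding rowspan_def by (rule CollectI, rule exI[where x="\<lambda>r. a * c r"], simp add: h)
qed

lemma rs_zero: "(\<lambda>i. 0) \<in> rowspan k B"
proof -
  have h: "(\<lambda>i. 0) = (\<lambda>i. \<Sum>r\<in>{1..k}. 0 * B r i)" by simp
  show ?thesis unfolding rowspan_def by (rule CollectI, rule exI[where x="\<lambda>r. 0"], simp)
qed

lemma rs_diff: "x \<in> rowspan k B \<Longrightarrow> y \<in> rowspan k B \<Longrightarrow> (\<lambda>i. x i - y i) \<in> rowspan k B"
proof -
  assume a: "x \<in> rowspan k B" "y \<in> rowspan k B"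
  have "(\<lambda>i. x i + (- 1) * y i) \<in> rowspan k B" by (rule rs_add[OF a(1) rs_scale[OF a(2)]])
  then show ?thesis by simp
qed

lemma rs_comb: "finite S \<Longrightarrow> (\<forall>p\<in>S. y p \<in> rowspan k B) \<Longrightarrow> (\<lambda>i. \<Sum>p\<in>S. a p * y p i) \<in> rowspan k B"
proof (induction S rule: finite_induct)
  case empty then show ?case using rs_zero by simp
next
  case (insert p S)
  have "(\<lambda>i. a p * y p i + (\<Sum>p\<in>S. a p * y p i)) \<in> rowspan k B"
    using rs_add[OF rs_scale[of "y p"] insert.IH] insert.prems by simp
  then show ?case using insert.hyps by simp
qed

lemma rs_row: "r \<in> {1..k} \<Longrightarrow> B r \<in> rowspan k B"
proof -
  assume r: "r \<in> {1..k}"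
  have h: "B r = (\<lambda>i. \<Sum>s\<in>{1..k}. (if s = r then 1 else 0) * B s i)"
  proof (rule ext)
    fix i
    have "(\<Sum>s\<in>{1..k}. (if s = r then 1 else 0) * B s i) = (\<Sum>s\<in>{1..k}. if s = r then B s i else 0)"
      by (rule sum.cong) auto
    also have "\<dots> = B r i" using r by simp
    finally show "B r i = (\<Sum>s\<in>{1..k}. (if s = r then 1 else 0) * B s i)" by simp
  qed
  show ?thesis unfolding rowspan_def by (rule CollectI, rule exI[where x="\<lambda>s. if s = r then 1 else 0"], rule h)
qed

lemma rs_Fn: "(\<forall>r\<in>{1..k}. B r \<in> Fn n) \<Longrightarrow> x \<in> rowspan k B \<Longrightarrow> x \<in> Fn n"
  unfolding rowspan_def Fn_def by auto

lemma LD_coef: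
  assumes L: "LD n k M ld" and s: "s \<in> {1..k}"
  shows "(\<Sum>r\<in>{1..k}. c r * M r (ld s)) = c s"
proof -
  have "(\<Sum>r\<in>{1..k}. c r * M r (ld s)) = (\<Sum>r\<in>{1..k}. if r = s then c r else 0)"
  proof (rule sum.cong)
    fix r assume r: "r \<in> {1..k}"
    show "c r * M r (ld s) = (if r = s then c r else 0)" using LD_row[OF L s] r by auto
  qed simp
  also have "\<dots> = c s" using s by simp
  finally show ?thesis .
qed

lemma LD_vanish:
  assumes L: "LD n k M ld" and x: "x \<in> rowspan k M" and z: "\<forall>s\<in>{1..k}. x (ld s) = 0"
  shows "x = (\<lambda>i. 0)"
proof -
  obtain c where c: "x = (\<lambda>i. \<Sum>r\<in>{1..k}. c r * M r i)" using x unfolding rowspan_def by blast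
  have "c s = 0" if "s \<in> {1..k}" for s using z that LD_coef[OF L that, of c] c by simp
  then show ?thesis unfolding c by auto
qed

lemma LD_lead_img:
  assumes L: "LD n k M ld" and x: "x \<in> rowspan k M" and p: "x p \<noteq> 0" and ab: "\<forall>i. i > p \<longrightarrow> x i = 0"
  shows "p \<in> ld ` {1..k}"
proof -
  obtain c where c: "x = (\<lambda>i. \<Sum>r\<in>{1..k}. c r * M r i)" using x unfolding rowspan_def by blast
  have ne: "{r \<in> {1..k}. c r \<noteq> 0} \<noteq> {}"
  proof
    assume "{r \<in> {1..k}. c r \<noteq> 0} = {}"
    then have "x p = 0" unfolding c by auto
    then show False using p by simp
  qed
  define r0 where "r0 = Min {r \<in> {1..k}. c r \<noteq> 0}"
  have r0: "r0 \<in> {1..k}" "c r0 \<noteq> 0" using Min_in[OF _ ne] unfolding r0_def by auto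
  have r0min: "r \<in> {1..k} \<Longrightarrow> r < r0 \<Longrightarrow> c r = 0" for r using Min_le[of "{r \<in> {1..k}. c r \<noteq> 0}" r] unfolding r0_def
    by fastforce
  have v: "x (ld r0) = c r0" unfolding c using LD_coef[OF L r0(1)] .
  have above: "x i = 0" if i: "i > ld r0" for i
  proof -
    have "c r * M r i = 0" if r: "r \<in> {1..k}" for r
    proof (cases "r < r0")
      case True then show ?thesis using r0min r by simp
    next
      case False
      then have "ld r \<le> ld r0" using LD_mono[OF L, of r0 r] r r0(1) by (cases "r = r0") auto
      then show ?thesis using LD_row[OF L r] i by auto
    qed
    then show ?thesis unfolding c by (auto intro!: sum.neutral)
  qed
  have "p = ld r0"
  proof (rule ccontr)
    assume "p \<noteq> ld r0"
    then consider "p < ld r0" | "p > ld r0" by linarith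
    then show False
    proof cases
      case 1 then show False using ab v r0(2) by auto
    next
      case 2 then show False using above p by auto
    qed
  qed
  then show ?thesis using r0(1) by blast
qed

lemma SD_eq:
  fixes f g :: "nat \<Rightarrow> nat"
  assumes f: "\<forall>r\<in>{1..k}. \<forall>r'\<in>{1..k}. r < r' \<longrightarrow> f r' < f r"
    and g: "\<forall>r\<in>{1..k}. \<forall>r'\<in>{1..k}. r < r' \<longrightarrow> g r' < g r"
    and im: "f ` {1..k} = g ` {1..k}"
  shows "r \<in> {1..k} \<Longrightarrow> f r = g r"
proof (induction r rule: less_induct)
  case (less r)
  obtain s where s: "s \<in> {1..k}" "g r = f s" using im less.prems by (metis imageE image_eqI)
  have "\<not> s < r"
  proof
    assume "s < r"
    then have "f s = g s" using less.IH s(1) by blast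
    moreover have "g r < g s" using g \<open>s < r\<close> s(1) less.prems by blast
    ultimately show False using s by simp
  qed
  moreover have "\<not> s > r"
  proof
    assume sr: "s > r"
    then have gr: "g r < f r" using f s less.prems by auto
    obtain t where t: "t \<in> {1..k}" "f r = g t" using im less.prems by (metis imageE image_eqI)
    consider "t < r" | "t = r" | "t > r" by linarith
    then show False
    proof cases
      case 1 then have "f t = g t" using less.IH t(1) by blast
      moreover have "f r < f t" using f 1 t(1) less.prems by blast
      ultimately show False using t by simp
    next
      case 2 then show False using gr t by simp
    next
      case 3 then have "g t < g r" using g t less.prems by auto
      then show False using gr t by simp
    qed
  qed
  ultimately show ?case using s by simp
qed

lemma RREF_unique:
  assumes M: "is_RREF n k M" and M': "is_RREF n k M'" and e: "rowspan k M = rowspan k M'"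
  shows "M = M'"
proof -
  obtain ld where B: "BOX n k M" and L: "LD n k M ld" using M unfolding RREF_iff by blast
  obtain ld' where B': "BOX n k M'" and L': "LD n k M' ld'" using M' unfolding RREF_iff by blast
  have sub: "ld ` {1..k} \<subseteq> ld' ` {1..k}" if L: "LD n k M ld" and L': "LD n k M' ld'" and e: "rowspan k M = rowspan k M'"
    for M M' :: "nat \<Rightarrow> nat \<Rightarrow> 'a" and ld ld'
  proof
    fix p assume "p \<in> ld ` {1..k}"
    then obtain s where s: "s \<in> {1..k}" "p = ld s" by blast
    have "M s \<in> rowspan k M'" using rs_row[of s k M] s(1) e by simp
    then show "p \<in> ld' ` {1..k}" using LD_lead_img[OF L', of "M s" p] LD_row[OF L s(1)] s by simp
  qed
  have im: "ld ` {1..k} = ld' ` {1..k}" using sub[OF L L' e] sub[OF L' L e[symmetric]] by blast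
  have ldeq: "r \<in> {1..k} \<Longrightarrow> ld r = ld' r" for r
    by (rule SD_eq[OF _ _ im]) (use L L' in \<open>auto simp: LD_def\<close>)
  show ?thesis
  proof (intro ext)
    fix r i
    show "M r i = M' r i"
    proof (cases "r \<in> {1..k}")
      case False then show ?thesis using B B' unfolding BOX_def by simp
    next
      case True
      let ?d = "\<lambda>i. M' r i - M r i"
      have "M' r \<in> rowspan k M" using rs_row[of r k M'] True e by simp
      then have d: "?d \<in> rowspan k M" by (rule rs_diff[OF _ rs_row[of r k M, OF True]])
      have "?d (ld s) = 0" if s: "s \<in> {1..k}" for s
      proof -
        have "M' r (ld s) = (if r = s then 1 else 0)" using LD_row[OF L' s] ldeq[OF s] True by auto
        moreover have "M r (ld s) = (if r = s then 1 else 0)" using LD_row[OF L s] True by auto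
        ultimately show ?thesis by simp
      qed
      then have "?d = (\<lambda>i. 0)" using LD_vanish[OF L d] by blast
      then show ?thesis using fun_cong[of ?d "\<lambda>i. 0" i] by simp
    qed
  qed
qed

lemma RREF_indep: assumes L: "LD n k M ld" shows "lin_indep k M"
  unfolding lin_indep_def
proof (intro allI impI ballI)
  fix c r assume z: "(\<lambda>i. \<Sum>r\<in>{1..k}. c r * M r i) = (\<lambda>i. 0)" and r: "r \<in> {1..k}"
  have "(\<Sum>s\<in>{1..k}. c s * M s (ld r)) = 0" using fun_cong[OF z, of "ld r"] by simp
  then show "c r = 0" using LD_coef[OF L r] by simp
qed

lemma RREF_Gq: assumes "is_RREF n k M" shows "rowspan k M \<in> Gq n k"
proof -
  obtain ld where B: "BOX n k M" and L: "LD n k M ld" using assms unfolding RREF_iff by blast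
  have "\<forall>r\<in>{1..k}. M r \<in> Fn n" using B unfolding BOX_def Fn_def by auto
  then show ?thesis unfolding Gq_def using RREF_indep[OF L] by blast
qed


lemma card_rowspan:
  assumes I: "lin_indep k (B :: nat \<Rightarrow> nat \<Rightarrow> 'a::{finite,field})"
  shows "card (rowspan k B) = card (UNIV :: 'a set) ^ k"
proof -
  let ?f = "\<lambda>c::nat \<Rightarrow> 'a. (\<lambda>i. \<Sum>r\<in>{1..k}. c r * B r i)"
  have e: "rowspan k B = ?f ` (PiE {1..k} (\<lambda>_. UNIV))"
  proof
    show "rowspan k B \<subseteq> ?f ` (PiE {1..k} (\<lambda>_. UNIV))"
    proof
      fix x assume "x \<in> rowspan k B"
      then obtain c where c: "x = ?f c" unfolding rowspan_def by blast
      have "?f c = ?f (restrict c {1..k})" by (intro ext sum.cong) auto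
      moreover have "restrict c {1..k} \<in> PiE {1..k} (\<lambda>_. UNIV)" by simp
      ultimately show "x \<in> ?f ` (PiE {1..k} (\<lambda>_. UNIV))" unfolding c by (rule image_eqI)
    qed
    show "?f ` (PiE {1..k} (\<lambda>_. UNIV)) \<subseteq> rowspan k B" unfolding rowspan_def by blast
  qed
  have inj: "inj_on ?f (PiE {1..k} (\<lambda>_. UNIV))"
  proof (rule inj_onI)
    fix c d assume c: "c \<in> PiE {1..k} (\<lambda>_. UNIV :: 'a set)" and d: "d \<in> PiE {1..k} (\<lambda>_. UNIV :: 'a set)" and e: "?f c = ?f d"
    have h: "(\<lambda>i. \<Sum>r\<in>{1..k}. (c r - d r) * B r i) = (\<lambda>i. 0)"
    proof
      fix i
      have "(\<Sum>r\<in>{1..k}. (c r - d r) * B r i) = (\<Sum>r\<in>{1..k}. c r * B r i) - (\<Sum>r\<in>{1..k}. d r * B r i)"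
        by (simp add: left_diff_distrib sum_subtractf)
      also have "\<dots> = 0" using fun_cong[OF e, of i] by simp
      finally show "(\<Sum>r\<in>{1..k}. (c r - d r) * B r i) = 0" .
    qed
    have "\<forall>r\<in>{1..k}. c r - d r = 0" using spec[OF I[unfolded lin_indep_def], of "\<lambda>r. c r - d r"] h by simp
    then show "c = d" by (intro PiE_ext[OF c d]) auto
  qed
  have "card (rowspan k B) = card (PiE {1..k} (\<lambda>_. UNIV :: 'a set))" by (subst e, rule card_image[OF inj])
  also have "\<dots> = (\<Prod>i\<in>{1..k}. card (UNIV :: 'a set))" by (rule card_PiE) simp
  finally show ?thesis by simp
qed

lemma exists_RREF:
  assumes XG: "X \<in> Gq n k"
  shows "\<exists>M :: nat \<Rightarrow> nat \<Rightarrow> 'a::{finite,field}. is_RREF n k M \<and> rowspan k M = X"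
proof -
  obtain B :: "nat \<Rightarrow> nat \<Rightarrow> 'a" where X: "X = rowspan k B" and BF: "\<forall>r\<in>{1..k}. B r \<in> Fn n" and BI: "lin_indep k B"
    using XG unfolding Gq_def by blast
  have XF: "x \<in> X \<Longrightarrow> x \<in> Fn n" for x using rs_Fn[OF BF] X by blast
  define P where "P = {p \<in> {1..n}. \<exists>x\<in>X. x p = 1 \<and> (\<forall>i>p. x i = 0)}"
  define good where "good p x \<longleftrightarrow> x \<in> X \<and> x p = 1 \<and> (\<forall>i>p. x i = 0) \<and> (\<forall>p'\<in>P. p' \<noteq> p \<longrightarrow> x p' = 0)" for p x
  have finP: "finite P" unfolding P_def by simp
  have Pn: "P \<subseteq> {1..n}" unfolding P_def by blast
  have ex: "p \<in> P \<Longrightarrow> \<exists>x. good p x" for p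
  proof (induction p rule: less_induct)
    case (less p)
    obtain x0 where x0: "x0 \<in> X" "x0 p = 1" "\<forall>i>p. x0 i = 0" using less.prems unfolding P_def by blast
    define S where "S = {p' \<in> P. p' < p}"
    have finS: "finite S" unfolding S_def using finP by simp
    define g where "g p' = (SOME x. good p' x)" for p'
    have gg: "good p' (g p')" if "p' \<in> S" for p'
    proof -
      have "\<exists>x. good p' x" using less.IH that unfolding S_def by blast
      then show ?thesis unfolding g_def by (rule someI_ex)
    qed
    define y where "y = (\<lambda>i. x0 i - (\<Sum>p'\<in>S. x0 p' * g p' i))"
    have x0B: "x0 \<in> rowspan k B" using x0(1) X by simp
    have gB: "\<forall>p'\<in>S. g p' \<in> rowspan k B"
    proof
      fix p' assume "p' \<in> S" then have "g p' \<in> X" using gg unfolding good_def by blast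
      then show "g p' \<in> rowspan k B" using X by simp
    qed
    have "y \<in> rowspan k B" unfolding y_def by (rule rs_diff[OF x0B rs_comb[OF finS gB]])
    then have yX: "y \<in> X" using X by simp
    have gz: "g p' i = 0" if "p' \<in> S" "i \<ge> p" for p' i
    proof -
      have "i > p'" using that unfolding S_def by auto
      then show ?thesis using gg[OF that(1)] unfolding good_def by blast
    qed
    have s0: "(\<Sum>p'\<in>S. x0 p' * g p' i) = 0" if "i \<ge> p" for i
      by (rule sum.neutral) (use gz that in auto)
    have yabove: "y i = 0" if "i \<ge> p" "i \<noteq> p" for i
      unfolding y_def using x0(3) s0[OF that(1)] that by simp
    have yp: "y p = 1" unfolding y_def using x0(2) s0[of p] by simp
    have yP: "y p'' = 0" if "p'' \<in> P" "p'' \<noteq> p" for p''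
    proof (cases "p'' > p")
      case True then show ?thesis using yabove by simp
    next
      case False
      then have p''S: "p'' \<in> S" unfolding S_def using that by auto
      have "(\<Sum>p'\<in>S. x0 p' * g p' p'') = (\<Sum>p'\<in>S. if p' = p'' then x0 p' else 0)"
      proof (rule sum.cong)
        fix p' assume p': "p' \<in> S"
        show "x0 p' * g p' p'' = (if p' = p'' then x0 p' else 0)"
          using gg[OF p'] that(1) unfolding good_def by auto
      qed simp
      also have "\<dots> = x0 p''" using p''S finS by simp
      finally show ?thesis unfolding y_def by simp
    qed
    have ya: "\<forall>i>p. y i = 0" using yabove by simp
    have "good p y" unfolding good_def using yX yp ya yP by blast
    then show ?case by blast
  qed
  define g where "g p = (SOME x. good p x)" for p
  have gg: "good p (g p)" if "p \<in> P" for p unfolding g_def using ex[OF that] by (rule someI_ex)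
  define m where "m = card P"
  define L where "L = sorted_list_of_set P"
  have Lset: "set L = P" and Llen: "length L = m" and Lsort: "sorted_wrt (<) L"
    unfolding L_def m_def using finP by auto
  define ld where "ld r = L ! (m - r)" for r
  have ldP: "ld r \<in> P" if "r \<in> {1..m}" for r
  proof -
    have "m - r < length L" using that Llen by auto
    then show ?thesis unfolding ld_def using nth_mem[of "m - r" L] Lset by blast
  qed
  have ldmono: "ld r' < ld r" if "r \<in> {1..m}" "r' \<in> {1..m}" "r < r'" for r r'
    unfolding ld_def using sorted_wrt_nth_less[OF Lsort, of "m - r'" "m - r"] that Llen by auto
  have ldimg: "ld ` {1..m} = P"
  proof
    show "ld ` {1..m} \<subseteq> P" using ldP by blast
    show "P \<subseteq> ld ` {1..m}"
    proof
      fix p assume "p \<in> P"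
      then obtain j where j: "j < m" "L ! j = p" using Lset Llen by (metis in_set_conv_nth)
      have "m - j \<in> {1..m}" "ld (m - j) = p" unfolding ld_def using j by auto
      then show "p \<in> ld ` {1..m}" by blast
    qed
  qed
  define M where "M r i = (if r \<in> {1..m} then g (ld r) i else 0)" for r i
  have Mrow: "r \<in> {1..m} \<Longrightarrow> M r = g (ld r)" for r unfolding M_def by auto
  have MX: "M r \<in> X" if r: "r \<in> {1..m}" for r using gg[OF ldP[OF r]] Mrow[OF r] unfolding good_def by simp
  have BOX: "BOX n m M" unfolding BOX_def
  proof (intro allI impI)
    fix r i assume a: "r \<notin> {1..m} \<or> i \<notin> {1..n}"
    show "M r i = 0"
    proof (cases "r \<in> {1..m}")
      case True
      then have "i \<notin> {1..n}" using a by blast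
      then have "i < 1 \<or> i > n" by auto
      moreover have "M r \<in> Fn n" using MX[OF True] XF by blast
      ultimately show ?thesis unfolding Fn_def by blast
    next
      case False then show ?thesis unfolding M_def by auto
    qed
  qed
  have LD: "LD n m M ld" unfolding LD_def
  proof (intro conjI ballI allI impI)
    fix r assume r: "r \<in> {1..m}"
    note G = gg[OF ldP[OF r]]
    show "ld r \<in> {1..n}" using ldP[OF r] Pn by blast
    show "M r (ld r) = 1" using G Mrow[OF r] unfolding good_def by simp
    show "\<And>i. ld r < i \<Longrightarrow> M r i = 0" using G Mrow[OF r] unfolding good_def by simp
    fix r' assume r': "r' \<in> {1..m}" "r' \<noteq> r"
    have "ld r' \<noteq> ld r" using ldmono[OF r r'(1)] ldmono[OF r'(1) r] r'(2) by (cases "r < r'") auto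
    then show "M r' (ld r) = 0" using gg[OF ldP[OF r'(1)]] Mrow[OF r'(1)] ldP[OF r] unfolding good_def by simp
  next
    fix r r' assume "r \<in> {1..m}" "r' \<in> {1..m}" "r < r'"
    then show "ld r' < ld r" by (rule ldmono)
  qed
  have span: "rowspan m M = X"
  proof
    show "rowspan m M \<subseteq> X"
    proof
      fix x assume "x \<in> rowspan m M"
      then obtain c where c: "x = (\<lambda>i. \<Sum>r\<in>{1..m}. c r * M r i)" unfolding rowspan_def by blast
      have MB: "\<forall>r\<in>{1..m}. M r \<in> rowspan k B" using MX X by simp
      have "(\<lambda>i. \<Sum>r\<in>{1..m}. c r * M r i) \<in> rowspan k B"
        using rs_comb[where S="{1..m}" and y=M and k=k and B=B and a=c] MB by simp
      then show "x \<in> X" using c X by simp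
    qed
    show "X \<subseteq> rowspan m M"
    proof
      fix x assume xX: "x \<in> X"
      let ?s = "\<lambda>i. \<Sum>r\<in>{1..m}. x (ld r) * M r i"
      define y where "y = (\<lambda>i. x i - ?s i)"
      have MB: "\<forall>r\<in>{1..m}. M r \<in> rowspan k B" using MX X by simp
      have sX: "?s \<in> X" unfolding X using rs_comb[where S="{1..m}" and y=M and k=k and B=B and a="\<lambda>r. x (ld r)"] MB by simp
      have yX: "y \<in> X" unfolding y_def X using rs_diff[of x k B ?s] xX sX X by simp
      have yld: "y (ld s) = 0" if "s \<in> {1..m}" for s
        unfolding y_def using LD_coef[OF LD that, of "\<lambda>r. x (ld r)"] by simp
      have y0: "y = (\<lambda>i. 0)"
      proof (rule ccontr)
        assume yn: "y \<noteq> (\<lambda>i. 0)"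
        have "\<exists>i0. y i0 \<noteq> 0"
        proof (rule ccontr)
          assume "\<not> (\<exists>i0. y i0 \<noteq> 0)"
          then have "y = (\<lambda>i. 0)" by (intro ext) simp
          then show False using yn by simp
        qed
        then obtain i0 where "y i0 \<noteq> 0" by blast
        define Z where "Z = {i. y i \<noteq> 0}"
        have ZF: "Z \<subseteq> {1..n}"
        proof
          fix i assume "i \<in> Z"
          then have "y i \<noteq> 0" unfolding Z_def by simp
          then have "\<not> (i < 1 \<or> i > n)" using XF[OF yX] unfolding Fn_def by blast
          then show "i \<in> {1..n}" by simp
        qed
        have Zne: "Z \<noteq> {}" using \<open>y i0 \<noteq> 0\<close> unfolding Z_def by blast
        have fZ: "finite Z" using ZF finite_subset by blast
        define p where "p = Max Z"
        have pZ: "p \<in> Z" unfolding p_def using Max_in[OF fZ Zne] .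
        have pab: "\<forall>i>p. y i = 0"
        proof (intro allI impI)
          fix i assume ip: "i > p"
          show "y i = 0"
          proof (rule ccontr)
            assume "y i \<noteq> 0"
            then have "i \<in> Z" unfolding Z_def by simp
            then have "i \<le> p" unfolding p_def by (rule Max_ge[OF fZ])
            then show False using ip by simp
          qed
        qed
        let ?z = "\<lambda>i. inverse (y p) * y i"
        have zX: "?z \<in> X" using rs_scale[of y k B "inverse (y p)"] yX X by simp
        have z1: "?z p = 1" using pZ unfolding Z_def by simp
        have z0: "\<forall>i>p. ?z i = 0" using pab by simp
        have "\<exists>x\<in>X. x p = 1 \<and> (\<forall>i>p. x i = 0)"
          by (rule bexI[of _ ?z]) (use zX z1 z0 in auto)
        then have "p \<in> P" unfolding P_def using pZ ZF by blast
        then obtain s where "s \<in> {1..m}" "p = ld s" using ldimg by blast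
        then have "y p = 0" using yld by simp
        then show False using pZ unfolding Z_def by simp
      qed
      have "x = ?s"
      proof
        fix i show "x i = ?s i" using fun_cong[OF y0, of i] unfolding y_def by simp
      qed
      then show "x \<in> rowspan m M" unfolding rowspan_def
      proof (intro CollectI exI[where x="\<lambda>r. x (ld r)"])
        assume "x = ?s"
        then show "x = (\<lambda>i. \<Sum>r\<in>{1..m}. x (ld r) * M r i)" by simp
      qed
    qed
  qed
  have "card X = card (UNIV :: 'a set) ^ k" using card_rowspan[OF BI] X by simp
  moreover have "card X = card (UNIV :: 'a set) ^ m" using card_rowspan[OF RREF_indep[OF LD]] span by simp
  moreover have "card (UNIV :: 'a set) > 1"
  proof -
    have "card {0::'a, 1} = 2" by simp
    moreover have "card {0::'a, 1} \<le> card (UNIV :: 'a set)" by (rule card_mono) auto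
    ultimately show ?thesis by simp
  qed
  ultimately have "m = k" by simp
  then show ?thesis using BOX LD span unfolding RREF_iff by blast
qed


lemma RE_eq: assumes "is_RREF n k M" shows "RE n k (rowspan k M) = M"
  unfolding RE_def
proof (rule the_equality)
  show "is_RREF n k M \<and> rowspan k M = rowspan k M" using assms by simp
  fix M' assume "is_RREF n k M' \<and> rowspan k M' = rowspan k M"
  then show "M' = M" using RREF_unique[OF assms, of M'] by simp
qed

lemma vvec_eq: "vvec n k X = lv k (RE n k X)"
  by (rule ext) (simp add: vvec_def lv_def)
lemma wsum_eq: "wsum n k X = ws k (RE n k X)"
  by (rule ext) (simp add: wsum_def ws_def vvec_eq)
lemma colX_eq: "colX_val q enc n k X = cv q enc k (RE n k X)"
  by (rule ext) (simp add: colX_val_def cv_def)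
lemma ext_less_eq: "ext_less q enc n k Y X = ml q enc n k (RE n k Y) (RE n k X)"
  unfolding ext_less_def ml_def ext_col_differ_def df_def ext_colval_def ev_def vvec_eq colX_eq ..

theorem theorem3:
  fixes enc :: "'a::{finite,field} \<Rightarrow> nat" and q n k :: nat and X :: "(nat \<Rightarrow> 'a) set"
  assumes "q = card (UNIV :: 'a set)"
    and "bij_betw enc UNIV {0..<q}" and "enc 0 = 0" and "enc 1 = 1"
    and "k \<le> n"
    and "X \<in> Gq n k"
  shows "real (card {Y \<in> Gq n k. ext_less q enc n k Y X}) =
    (\<Sum>j\<in>{1..n}.
       (real (vvec n k X j) * real q ^ (k - wsum n k X (j - 1))
        + (1 - real (vvec n k X j)) * real (colX_val q enc n k X j) / real q ^ (wsum n k X (j - 1)))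
       * gauss q (n - j) (int k - int (wsum n k X (j - 1))))"
proof -
  interpret encq enc q by unfold_locales (use assms in auto)
  obtain MX :: "nat \<Rightarrow> nat \<Rightarrow> 'a" where MX: "is_RREF n k MX" "rowspan k MX = X" using exists_RREF[OF assms(6)] by blast
  have REX: "RE n k X = MX" using RE_eq[OF MX(1)] MX(2) by simp
  have e: "{Y \<in> Gq n k. ext_less q enc n k Y X} = rowspan k ` {M \<in> SS n k. ml q enc n k M MX}"
  proof
    show "{Y \<in> Gq n k. ext_less q enc n k Y X} \<subseteq> rowspan k ` {M \<in> SS n k. ml q enc n k M MX}"
    proof
      fix Y assume Y: "Y \<in> {Y \<in> Gq n k. ext_less q enc n k Y X}"
      then obtain M :: "nat \<Rightarrow> nat \<Rightarrow> 'a" where M: "is_RREF n k M" "rowspan k M = Y" using exists_RREF[of Y n k] by blast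
      have "RE n k Y = M" using RE_eq[OF M(1)] M(2) by simp
      then have "ml q enc n k M MX" using Y REX ext_less_eq[of q enc n k Y X] by simp
      then have "M \<in> {M \<in> SS n k. ml q enc n k M MX}" using M(1) unfolding SS_def by simp
      then show "Y \<in> rowspan k ` {M \<in> SS n k. ml q enc n k M MX}" using M(2) by blast
    qed
    show "rowspan k ` {M \<in> SS n k. ml q enc n k M MX} \<subseteq> {Y \<in> Gq n k. ext_less q enc n k Y X}"
    proof
      fix Y assume "Y \<in> rowspan k ` {M \<in> SS n k. ml q enc n k M MX}"
      then obtain M where M: "M \<in> SS n k" "ml q enc n k M MX" "Y = rowspan k M" by blast
      have R: "is_RREF n k M" using M(1) unfolding SS_def by simp
      have "Y \<in> Gq n k" using RREF_Gq[OF R] M(3) by simp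
      moreover have "ext_less q enc n k Y X" using M(2) RE_eq[OF R] REX M(3) ext_less_eq[of q enc n k Y X] by simp
      ultimately show "Y \<in> {Y \<in> Gq n k. ext_less q enc n k Y X}" by blast
    qed
  qed
  have inj: "inj_on (rowspan k) {M \<in> (SS n k :: (nat \<Rightarrow> nat \<Rightarrow> 'a) set). ml q enc n k M MX}"
    by (rule inj_onI) (use RREF_unique in \<open>auto simp: SS_def\<close>)
  have "real (card {Y \<in> Gq n k. ext_less q enc n k Y X}) = real (card {M \<in> (SS n k :: (nat \<Rightarrow> nat \<Rightarrow> 'a) set). ml q enc n k M MX})"
    unfolding e card_image[OF inj] ..
  also have "\<dots> = (\<Sum>j\<in>{1..n}. TT q enc n k MX j)" by (rule main) (use MX(1) in \<open>simp add: SS_def\<close>)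
  finally show ?thesis unfolding TT_def vvec_eq wsum_eq colX_eq REX .
qed

end
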